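(* Let $f$ be continuous on $Q=[a_1,b_1]\times\dots\times[a_n,b_n]$. For $x=(x^1,\dots,x^n)\in Q$ write $\tilde x^i=(x^1,\dots,x^{i-1},x^{i+1},\dots,x^n)$. Let $f_i[\tilde x^i]$ be the function $x^i\mapsto f(x^1,\dots,x^n)$ on $[a_i,b_i]$ with the other coordinates fixed. Let $H_1,\dots,H_n\in(0,1]$. (1) Suppose there are constants $c_i>0$ such that for all $i$, all $\tilde x^i$, all $x^i\in[a_i,b_i]$ and all sufficiently small $\delta>0$ one has $\mathrm{osc}_\delta(x^i)(f_i[\tilde x^i])\le c_i\delta^{H_i}$. Then the upper box-counting dimension of the graph of $f$ (a subset of $\mathbb R^{n+1}$) is at most $n+1-\min\{H_1,\dots,H_n\}$. (2) Suppose that for each $i$ there is a dense subset $A_i$ of $\prod_{j\ne i}[a_j,b_j]$ and a constant $c_i>0$ such that $\mathrm{Var}_\delta(f_i[\tilde x^i])\ge c_i\delta^{H_i}$ for all $\tilde x^i\in A_i$ and all sufficiently small $\delta>0$. Then the lower box-counting dimension of the graph of $f$ is at least $n+1-\min\{H_1,\dots,H_n\}$. (3) If the hypotheses of both (1) and (2) hold, then the box-counting dimension of the graph of $f$ exists and equals $n+1-\min\{H_1,\dots,H_n\}=n-1+\max\{s_1,\dots,s_n\}$, where $s_i=\sup_{\tilde x^i}\dim_B\mathrm{graph} f_i[\tilde x^i]$.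
   Context: For a continuous $g:[a,b]\to\mathbb R$ and $\delta>0$, the $\delta$-oscillation of $g$ at $x$ is $\mathrm{osc}_\delta(x)(g)=\sup\{|g(y)-g(z)|:y,z\in[a,b]\cap[x-\delta,x+\delta]\}$. The $\delta$-variation is $\mathrm{Var}_\delta(g)=\int_a^b\mathrm{osc}_\delta(x)(g)\,dx$. For a bounded $A\subset\mathbb R^d$, $N(\delta)$ is the number of cubes of the $\delta$-grid (products of intervals $[m_j\delta,(m_j+1)\delta]$, $m_j\in\mathbb Z$) meeting $A$. Upper and lower box-counting dimensions are $\limsup$ and $\liminf$ as $\delta\to0$ of $\ln N(\delta)/\ln(1/\delta)$, and $\dim_B$ denotes their common value when they agree. *)

theory Defs
  imports "HOL-Analysis.Analysis"
begin

definition osc :: "real \<Rightarrow> real \<Rightarrow> real \<Rightarrow> real \<Rightarrow> (real \<Rightarrow> real) \<Rightarrow> real" where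
  "osc a b \<delta> x g = Sup {\<bar>g y - g z\<bar> | y z.
      y \<in> {a..b} \<inter> {x - \<delta>..x + \<delta>} \<and> z \<in> {a..b} \<inter> {x - \<delta>..x + \<delta>}}"

definition Var :: "real \<Rightarrow> real \<Rightarrow> real \<Rightarrow> (real \<Rightarrow> real) \<Rightarrow> real" where
  "Var a b \<delta> g = integral {a..b} (\<lambda>x. osc a b \<delta> x g)"

definition grid_count :: "real \<Rightarrow> 'a::euclidean_space set \<Rightarrow> nat" where
  "grid_count \<delta> A = card {m \<in> Basis \<rightarrow>\<^sub>E (UNIV :: int set).
      \<exists>p\<in>A. \<forall>e\<in>Basis. of_int (m e) * \<delta> \<le> p \<bullet> e \<and> p \<bullet> e \<le> (of_int (m e) + 1) * \<delta>}"

definition upper_box_dim :: "'a::euclidean_space set \<Rightarrow> ereal" where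
  "upper_box_dim A = Limsup (at_right 0)
      (\<lambda>\<delta>. ereal (ln (real (grid_count \<delta> A)) / ln (1 / \<delta>)))"

definition lower_box_dim :: "'a::euclidean_space set \<Rightarrow> ereal" where
  "lower_box_dim A = Liminf (at_right 0)
      (\<lambda>\<delta>. ereal (ln (real (grid_count \<delta> A)) / ln (1 / \<delta>)))"

definition has_box_dim :: "'a::euclidean_space set \<Rightarrow> real \<Rightarrow> bool" where
  "has_box_dim A d \<longleftrightarrow>
     ((\<lambda>\<delta>. ln (real (grid_count \<delta> A)) / ln (1 / \<delta>)) \<longlongrightarrow> d) (at_right 0)"

definition setcoord :: "real^'n \<Rightarrow> 'n \<Rightarrow> real \<Rightarrow> real^'n" where
  "setcoord x i t = (\<chi> j. if j = i then t else x $ j)"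

text \<open>f_i[x~^i]: the section t \<mapsto> f(x^1,..,t,..,x^n); x^i itself is ignored\<close>
definition fsec :: "(real^'n \<Rightarrow> real) \<Rightarrow> real^'n \<Rightarrow> 'n \<Rightarrow> real \<Rightarrow> real" where
  "fsec f x i = (\<lambda>t. f (setcoord x i t))"

definition graph1 :: "real \<Rightarrow> real \<Rightarrow> (real \<Rightarrow> real) \<Rightarrow> (real \<times> real) set" where
  "graph1 a b g = (\<lambda>t. (t, g t)) ` {a..b}"

definition graphn :: "(real^'n) set \<Rightarrow> (real^'n \<Rightarrow> real) \<Rightarrow> ((real^'n) \<times> real) set" where
  "graphn Q f = (\<lambda>x. (x, f x)) ` Q"

definition osc_hyp :: "real^'n \<Rightarrow> real^'n \<Rightarrow> (real^'n \<Rightarrow> real) \<Rightarrow> ('n \<Rightarrow> real) \<Rightarrow> bool" where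
  "osc_hyp a b f H \<longleftrightarrow> (\<exists>c. (\<forall>i. c i > 0) \<and> (\<exists>\<delta>0>0. \<forall>\<delta>. 0 < \<delta> \<and> \<delta> < \<delta>0 \<longrightarrow>
      (\<forall>i. \<forall>x\<in>cbox a b. \<forall>t\<in>{a$i..b$i}.
         osc (a$i) (b$i) \<delta> t (fsec f x i) \<le> c i * \<delta> powr H i)))"

text \<open>Hypothesis (2): lower bound of the delta-variation on a dense set of sections.
  The slice prod_{j<>i}[a_j,b_j] is identified with the face {x in Q. x_i = a_i}.\<close>
definition var_hyp :: "real^'n \<Rightarrow> real^'n \<Rightarrow> (real^'n \<Rightarrow> real) \<Rightarrow> ('n \<Rightarrow> real) \<Rightarrow> bool" where
  "var_hyp a b f H \<longleftrightarrow> (\<exists>A c. \<forall>i. c i > 0 \<and>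
      A i \<subseteq> {x \<in> cbox a b. x$i = a$i} \<and> {x \<in> cbox a b. x$i = a$i} \<subseteq> closure (A i) \<and>
      (\<exists>\<delta>0>0. \<forall>\<delta>. 0 < \<delta> \<and> \<delta> < \<delta>0 \<longrightarrow>
         (\<forall>x\<in>A i. Var (a$i) (b$i) \<delta> (fsec f x i) \<ge> c i * \<delta> powr H i)))"

end

theory Submission
  imports Defs "HOL-Real_Asymp.Real_Asymp"
begin

definition cell :: "real \<Rightarrow> ('a::euclidean_space \<Rightarrow> int) \<Rightarrow> 'a \<Rightarrow> bool" where
  "cell \<delta> m x \<longleftrightarrow> (\<forall>e\<in>Basis. of_int (m e) * \<delta> \<le> x \<bullet> e \<and> x \<bullet> e \<le> (of_int (m e) + 1) * \<delta>)"

definition gset :: "real \<Rightarrow> 'a::euclidean_space set \<Rightarrow> ('a \<Rightarrow> real) \<Rightarrow> (('a \<Rightarrow> int) \<times> int) set" where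
  "gset \<delta> Q f = {(m, j). m \<in> Basis \<rightarrow>\<^sub>E (UNIV :: int set) \<and>
     (\<exists>x\<in>Q. cell \<delta> m x \<and> of_int j * \<delta> \<le> f x \<and> f x \<le> (of_int j + 1) * \<delta>)}"

lemma grid_count_graph:
  fixes f :: "'a::euclidean_space \<Rightarrow> real"
  shows "grid_count \<delta> ((\<lambda>x. (x, f x)) ` Q) = card (gset \<delta> Q f)"
proof -
  let ?G = "{m \<in> (Basis::('a\<times>real) set) \<rightarrow>\<^sub>E (UNIV :: int set).
      \<exists>p\<in>(\<lambda>x. (x, f x)) ` Q. \<forall>e\<in>Basis. of_int (m e) * \<delta> \<le> p \<bullet> e \<and> p \<bullet> e \<le> (of_int (m e) + 1) * \<delta>}"
  define \<Phi> where "\<Phi> = (\<lambda>M::('a\<times>real) \<Rightarrow> int. (restrict (\<lambda>e. M (e,0)) Basis, M (0,1)))"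
  define \<Psi> where "\<Psi> = (\<lambda>(m::'a\<Rightarrow>int, j::int). restrict (\<lambda>u::'a\<times>real. if u = (0,1) then j else m (fst u)) Basis)"
  have B: "(Basis::('a\<times>real) set) = (\<lambda>u. (u, 0)) ` Basis \<union> {(0,1)}"
    by (simp add: Basis_prod_def)
  have n01: "(0::'a, 1::real) \<notin> (\<lambda>u. (u, 0)) ` Basis" by auto
  have inB1: "(0::'a, 1::real) \<in> Basis" unfolding B by blast
  have inB2: "\<And>e::'a. e \<in> Basis \<Longrightarrow> (e, 0::real) \<in> Basis" unfolding B by blast
  have "bij_betw \<Phi> ?G (gset \<delta> Q f)"
  proof (rule bij_betw_byWitness[where f'=\<Psi>])
    show "\<forall>M\<in>?G. \<Psi> (\<Phi> M) = M"
    proof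
      fix M assume "M \<in> ?G"
      then have M: "M \<in> Basis \<rightarrow>\<^sub>E UNIV" by blast
      show "\<Psi> (\<Phi> M) = M"
      proof
        fix u :: "'a \<times> real"
        show "\<Psi> (\<Phi> M) u = M u"
          using M unfolding \<Phi>_def \<Psi>_def B
          by (cases "u \<in> (\<lambda>u. (u, 0)) ` Basis \<union> {(0,1)}") (auto simp: PiE_def extensional_def, metis prod.collapse)
      qed
    qed
    show "\<forall>p\<in>gset \<delta> Q f. \<Phi> (\<Psi> p) = p"
    proof
      fix p assume "p \<in> gset \<delta> Q f"
      then obtain m j where p: "p = (m,j)" "m \<in> Basis \<rightarrow>\<^sub>E UNIV" unfolding gset_def by blast
      show "\<Phi> (\<Psi> p) = p"
        using p unfolding \<Phi>_def \<Psi>_def B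
        by (auto simp: PiE_def extensional_def fun_eq_iff)
    qed
    show "\<Phi> ` ?G \<subseteq> gset \<delta> Q f"
    proof
      fix q assume "q \<in> \<Phi> ` ?G"
      then obtain M where M: "M \<in> ?G" "q = \<Phi> M" by blast
      then obtain x where x: "x \<in> Q" and hx: "\<forall>e\<in>Basis. of_int (M e) * \<delta> \<le> (x, f x) \<bullet> e \<and> (x, f x) \<bullet> e \<le> (of_int (M e) + 1) * \<delta>"
        by blast
      have c: "cell \<delta> (restrict (\<lambda>e. M (e,0)) Basis) x"
        unfolding cell_def
      proof
        fix e :: 'a assume e: "e \<in> Basis"
        then have "(e,0) \<in> (Basis::('a\<times>real) set)" unfolding B by blast
        then show "of_int (restrict (\<lambda>e. M (e,0)) Basis e) * \<delta> \<le> x \<bullet> e \<and> x \<bullet> e \<le> (of_int (restrict (\<lambda>e. M (e,0)) Basis e) + 1) * \<delta>"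
          using hx e by (auto simp: inner_Pair)
      qed
      have "(0::'a,1::real) \<in> (Basis::('a\<times>real) set)" unfolding B by blast
      then have "of_int (M (0,1)) * \<delta> \<le> f x \<and> f x \<le> (of_int (M (0,1)) + 1) * \<delta>"
        using hx by (auto simp: inner_Pair)
      then show "q \<in> gset \<delta> Q f" using M(2) c x unfolding gset_def \<Phi>_def by auto
    qed
    show "\<Psi> ` gset \<delta> Q f \<subseteq> ?G"
    proof
      fix M assume "M \<in> \<Psi> ` gset \<delta> Q f"
      then obtain m j where mj: "(m,j) \<in> gset \<delta> Q f" "M = \<Psi> (m,j)" by force
      then obtain x where x: "x \<in> Q" "cell \<delta> m x" "of_int j * \<delta> \<le> f x \<and> f x \<le> (of_int j + 1) * \<delta>"
        unfolding gset_def by blast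
      have "\<forall>e\<in>Basis. of_int (M e) * \<delta> \<le> (x, f x) \<bullet> e \<and> (x, f x) \<bullet> e \<le> (of_int (M e) + 1) * \<delta>"
        unfolding B using x n01 mj(2) inB1 inB2 unfolding \<Psi>_def cell_def by (auto simp: inner_Pair)
      moreover have "M \<in> Basis \<rightarrow>\<^sub>E UNIV" using mj(2) unfolding \<Psi>_def by auto
      ultimately show "M \<in> ?G" using x(1) by blast
    qed
  qed
  then show ?thesis unfolding grid_count_def by (rule bij_betw_same_card)
qed

lemma osc_ge:
  assumes M: "\<And>x. x \<in> {\<alpha>..\<beta>} \<Longrightarrow> \<bar>g x\<bar> \<le> M"
    and y: "y \<in> {\<alpha>..\<beta>}" "\<bar>y - t\<bar> \<le> r" and z: "z \<in> {\<alpha>..\<beta>}" "\<bar>z - t\<bar> \<le> r"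
  shows "\<bar>g y - g z\<bar> \<le> osc \<alpha> \<beta> r t g"
  unfolding osc_def
proof (rule cSup_upper)
  show "\<bar>g y - g z\<bar> \<in> {\<bar>g y - g z\<bar> |y z. y \<in> {\<alpha>..\<beta>} \<inter> {t - r..t + r} \<and> z \<in> {\<alpha>..\<beta>} \<inter> {t - r..t + r}}"
    by (rule CollectI, rule exI[of _ y], rule exI[of _ z]) (use y z in \<open>auto simp: abs_le_iff\<close>)
  show "bdd_above {\<bar>g y - g z\<bar> |y z. y \<in> {\<alpha>..\<beta>} \<inter> {t - r..t + r} \<and> z \<in> {\<alpha>..\<beta>} \<inter> {t - r..t + r}}"
  proof (rule bdd_aboveI[where M="2*M"])
    fix w assume "w \<in> {\<bar>g y - g z\<bar> |y z. y \<in> {\<alpha>..\<beta>} \<inter> {t - r..t + r} \<and> z \<in> {\<alpha>..\<beta>} \<inter> {t - r..t + r}}"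
    then obtain y z where "w = \<bar>g y - g z\<bar>" "y \<in> {\<alpha>..\<beta>}" "z \<in> {\<alpha>..\<beta>}" by blast
    with M[of y] M[of z] show "w \<le> 2*M" by linarith
  qed
qed

lemma osc_le:
  assumes y0: "y0 \<in> {\<alpha>..\<beta>}" "\<bar>y0 - t\<bar> \<le> r"
    and B: "\<And>y z. y \<in> {\<alpha>..\<beta>} \<Longrightarrow> z \<in> {\<alpha>..\<beta>} \<Longrightarrow> \<bar>y - t\<bar> \<le> r \<Longrightarrow> \<bar>z - t\<bar> \<le> r \<Longrightarrow> \<bar>g y - g z\<bar> \<le> B"
  shows "osc \<alpha> \<beta> r t g \<le> B"
  unfolding osc_def
proof (rule cSup_least)
  show "{\<bar>g y - g z\<bar> |y z. y \<in> {\<alpha>..\<beta>} \<inter> {t - r..t + r} \<and> z \<in> {\<alpha>..\<beta>} \<inter> {t - r..t + r}} \<noteq> {}"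
  proof -
    have "\<bar>g y0 - g y0\<bar> \<in> {\<bar>g y - g z\<bar> |y z. y \<in> {\<alpha>..\<beta>} \<inter> {t - r..t + r} \<and> z \<in> {\<alpha>..\<beta>} \<inter> {t - r..t + r}}"
      by (rule CollectI, rule exI[of _ y0], rule exI[of _ y0]) (use y0 in \<open>auto simp: abs_le_iff\<close>)
    then show ?thesis by blast
  qed
  fix w assume "w \<in> {\<bar>g y - g z\<bar> |y z. y \<in> {\<alpha>..\<beta>} \<inter> {t - r..t + r} \<and> z \<in> {\<alpha>..\<beta>} \<inter> {t - r..t + r}}"
  then obtain y z where w: "w = \<bar>g y - g z\<bar>" and yz: "y \<in> {\<alpha>..\<beta>}" "z \<in> {\<alpha>..\<beta>}" "y \<in> {t - r..t + r}" "z \<in> {t - r..t + r}"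
    by blast
  then have "\<bar>y - t\<bar> \<le> r" "\<bar>z - t\<bar> \<le> r" by (simp_all add: abs_le_iff)
  then show "w \<le> B" using B[OF yz(1,2)] w by blast
qed

lemma osc_nonneg:
  assumes M: "\<And>x. x \<in> {\<alpha>..\<beta>} \<Longrightarrow> \<bar>g x\<bar> \<le> M"
    and y: "y \<in> {\<alpha>..\<beta>}" "\<bar>y - t\<bar> \<le> r"
  shows "0 \<le> osc \<alpha> \<beta> r t g"
  using osc_ge[OF M y y] by simp

lemma cont_bounded:
  fixes f :: "'a::euclidean_space \<Rightarrow> real"
  assumes "continuous_on S f" "compact S"
  obtains M where "\<And>x. x \<in> S \<Longrightarrow> \<bar>f x\<bar> \<le> M"
proof -
  have "bounded (f ` S)" using compact_continuous_image[OF assms] compact_imp_bounded by blast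
  then obtain M where "\<forall>y\<in>f ` S. norm y \<le> M" unfolding bounded_iff by blast
  then show ?thesis using that by (metis image_eqI real_norm_def)
qed

lemma int_le_floor_div: "0 < (\<delta>::real) \<Longrightarrow> of_int m * \<delta> \<le> y \<Longrightarrow> m \<le> \<lfloor>y / \<delta>\<rfloor>"
  by (simp add: le_floor_iff pos_le_divide_eq)

lemma ceil_div_le: "0 < (\<delta>::real) \<Longrightarrow> y \<le> (of_int m + 1) * \<delta> \<Longrightarrow> \<lceil>y / \<delta>\<rceil> - 1 \<le> m"
proof -
  assume "0 < \<delta>" "y \<le> (of_int m + 1) * \<delta>"
  then have "y / \<delta> \<le> of_int (m + 1)" by (simp add: pos_divide_le_eq)
  then have "\<lceil>y / \<delta>\<rceil> \<le> m + 1" by (simp add: ceiling_le_iff)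
  then show ?thesis by simp
qed

lemma js_sub:
  fixes g :: "'a \<Rightarrow> real"
  assumes "0 < \<delta>" "\<And>x. x \<in> S \<Longrightarrow> \<bar>g x\<bar> \<le> M"
  shows "{j::int. \<exists>t\<in>S. of_int j * \<delta> \<le> g t \<and> g t \<le> (of_int j + 1) * \<delta>} \<subseteq> {\<lceil>-M/\<delta>\<rceil> - 1..\<lfloor>M/\<delta>\<rfloor>}"
proof
  fix j assume "j \<in> {j::int. \<exists>t\<in>S. of_int j * \<delta> \<le> g t \<and> g t \<le> (of_int j + 1) * \<delta>}"
  then obtain t where t: "t \<in> S" "of_int j * \<delta> \<le> g t" "g t \<le> (of_int j + 1) * \<delta>" by blast
  have "\<bar>g t\<bar> \<le> M" using assms(2) t(1) by blast
  then have "g t \<le> M" "-M \<le> g t" by (simp_all add: abs_le_iff)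
  then have "of_int j * \<delta> \<le> M" "-M \<le> (of_int j + 1) * \<delta>" using t(2,3) by (meson order.trans)+
  then have "j \<le> \<lfloor>M/\<delta>\<rfloor>" "\<lceil>-M/\<delta>\<rceil> - 1 \<le> j"
    using int_le_floor_div[OF assms(1), of j M] ceil_div_le[OF assms(1), of "-M" j] by blast+
  then show "j \<in> {\<lceil>-M/\<delta>\<rceil> - 1..\<lfloor>M/\<delta>\<rfloor>}" by simp
qed

lemma js_finite:
  fixes g :: "'a \<Rightarrow> real"
  assumes "0 < \<delta>" "\<And>x. x \<in> S \<Longrightarrow> \<bar>g x\<bar> \<le> M"
  shows "finite {j::int. \<exists>t\<in>S. of_int j * \<delta> \<le> g t \<and> g t \<le> (of_int j + 1) * \<delta>}"
proof -
  have s: "{j::int. \<exists>t\<in>S. of_int j * \<delta> \<le> g t \<and> g t \<le> (of_int j + 1) * \<delta>} \<subseteq> {\<lceil>-M/\<delta>\<rceil> - 1..\<lfloor>M/\<delta>\<rfloor>}"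
    by (rule js_sub) (use assms in auto)
  show ?thesis by (rule finite_subset[OF s]) (rule finite_atLeastAtMost_int)
qed

lemma col_count:
  fixes g :: "real \<Rightarrow> real"
  assumes cont: "continuous_on {u..v} g" and d: "0 < \<delta>"
    and y: "y \<in> {u..v}" and z: "z \<in> {u..v}"
    and fin: "finite {j::int. \<exists>t\<in>{u..v}. of_int j * \<delta> \<le> g t \<and> g t \<le> (of_int j + 1) * \<delta>}"
  shows "\<bar>g y - g z\<bar> \<le> \<delta> * real (card {j::int. \<exists>t\<in>{u..v}. of_int j * \<delta> \<le> g t \<and> g t \<le> (of_int j + 1) * \<delta>})"
proof -
  let ?J = "{j::int. \<exists>t\<in>{u..v}. of_int j * \<delta> \<le> g t \<and> g t \<le> (of_int j + 1) * \<delta>}"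
  have conn: "connected (g ` {u..v})" using connected_continuous_image[OF cont] by simp
  have main: "g p - g q \<le> \<delta> * real (card ?J)" if p: "p \<in> {u..v}" and q: "q \<in> {u..v}" and pq: "g q \<le> g p" for p q
  proof -
    have sub: "{\<lfloor>g q / \<delta>\<rfloor>..\<lfloor>g p / \<delta>\<rfloor>} \<subseteq> ?J"
    proof
      fix j assume j: "j \<in> {\<lfloor>g q / \<delta>\<rfloor>..\<lfloor>g p / \<delta>\<rfloor>}"
      define w where "w = max (g q) (of_int j * \<delta>)"
      have j1: "of_int j * \<delta> \<le> g p" using j d by (auto simp: le_floor_iff pos_le_divide_eq)
      have j2: "g q < (of_int j + 1) * \<delta>"
      proof -
        have "g q / \<delta> < of_int \<lfloor>g q / \<delta>\<rfloor> + 1" by linarith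
        also have "\<dots> \<le> of_int j + 1" using j by simp
        finally show ?thesis using d by (simp add: pos_divide_less_eq)
      qed
      have "w \<in> g ` {u..v}"
        by (rule connectedD_interval[OF conn, of "g q" "g p"]) (use p q pq j1 in \<open>auto simp: w_def\<close>)
      then obtain t where "t \<in> {u..v}" "g t = w" by blast
      have "of_int j * \<delta> \<le> (of_int j + 1) * \<delta>" using d by (simp add: distrib_right)
      then show "j \<in> ?J" using j2 \<open>t \<in> {u..v}\<close> \<open>g t = w\<close> unfolding w_def by (intro CollectI bexI[of _ t]) auto
    qed
    have "card {\<lfloor>g q / \<delta>\<rfloor>..\<lfloor>g p / \<delta>\<rfloor>} \<le> card ?J" using card_mono[OF fin sub] .
    moreover have "(g p - g q) / \<delta> \<le> real (card {\<lfloor>g q / \<delta>\<rfloor>..\<lfloor>g p / \<delta>\<rfloor>})"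
    proof -
      have "g p / \<delta> < of_int \<lfloor>g p / \<delta>\<rfloor> + 1" by linarith
      moreover have "of_int \<lfloor>g q / \<delta>\<rfloor> \<le> g q / \<delta>" by linarith
      moreover have "\<lfloor>g q / \<delta>\<rfloor> \<le> \<lfloor>g p / \<delta>\<rfloor>" using pq d by (intro floor_mono divide_right_mono) auto
      moreover have "real (card {\<lfloor>g q / \<delta>\<rfloor>..\<lfloor>g p / \<delta>\<rfloor>}) = of_int (\<lfloor>g p / \<delta>\<rfloor> - \<lfloor>g q / \<delta>\<rfloor> + 1)"
        using calculation(3) by simp
      moreover have "(g p - g q) / \<delta> = g p / \<delta> - g q / \<delta>" by (simp add: diff_divide_distrib)
      ultimately show ?thesis by linarith
    qed
    ultimately have "(g p - g q) / \<delta> \<le> real (card ?J)" by linarith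
    then show ?thesis using d by (simp add: pos_divide_le_eq mult.commute)
  qed
  show ?thesis
  proof (cases "g z \<le> g y")
    case True then show ?thesis using main[OF y z] by simp
  next
    case False then show ?thesis using main[OF z y] by simp
  qed
qed

lemma var_bound:
  fixes g :: "real \<Rightarrow> real"
  assumes M: "\<And>x. x \<in> {\<alpha>..\<beta>} \<Longrightarrow> \<bar>g x\<bar> \<le> M" and d: "0 < \<delta>" and ab: "\<alpha> \<le> \<beta>"
  defines "K \<equiv> {k::int. of_int k * \<delta> \<le> \<beta> \<and> \<alpha> \<le> (of_int k + 1) * \<delta>}"
  defines "R \<equiv> (\<lambda>k::int. osc \<alpha> \<beta> (\<delta>/2) ((of_int k + 1/2) * \<delta>) g)"
  shows "finite K" "Var \<alpha> \<beta> \<delta> g \<le> 3 * \<delta> * (\<Sum>k\<in>K. R k)"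
proof -
  have Ksub: "K \<subseteq> {\<lceil>\<alpha>/\<delta>\<rceil> - 1..\<lfloor>\<beta>/\<delta>\<rfloor>}"
  proof
    fix k assume "k \<in> K"
    then have "of_int k * \<delta> \<le> \<beta>" "\<alpha> \<le> (of_int k + 1) * \<delta>" unfolding K_def by auto
    then have "k \<le> \<lfloor>\<beta>/\<delta>\<rfloor>" "\<lceil>\<alpha>/\<delta>\<rceil> - 1 \<le> k"
      using int_le_floor_div[OF d] ceil_div_le[OF d] by blast+
    then show "k \<in> {\<lceil>\<alpha>/\<delta>\<rceil> - 1..\<lfloor>\<beta>/\<delta>\<rfloor>}" by simp
  qed
  show finK: "finite K" by (rule finite_subset[OF Ksub]) (rule finite_atLeastAtMost_int)
  have win: "\<bar>y - (of_int k + 1/2) * \<delta>\<bar> \<le> \<delta>/2 \<longleftrightarrow> of_int k * \<delta> \<le> y \<and> y \<le> (of_int k + 1) * \<delta>" for y k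
  proof -
    have e: "(of_int k + 1/2) * \<delta> = of_int k * \<delta> + \<delta>/2" by (simp add: algebra_simps)
    show ?thesis unfolding e abs_le_iff distrib_right by auto
  qed
  have Rge: "\<bar>g y - g z\<bar> \<le> R k" if "y \<in> {\<alpha>..\<beta>}" "z \<in> {\<alpha>..\<beta>}"
      "of_int k * \<delta> \<le> y" "y \<le> (of_int k + 1) * \<delta>" "of_int k * \<delta> \<le> z" "z \<le> (of_int k + 1) * \<delta>" for y z k
    unfolding R_def by (rule osc_ge[OF M]) (use that win in auto)
  have inK: "k \<in> K" if "y \<in> {\<alpha>..\<beta>}" "of_int k * \<delta> \<le> y" "y \<le> (of_int k + 1) * \<delta>" for y k
    using that unfolding K_def by auto
  have Rnn: "0 \<le> R k" if "k \<in> K" for k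
  proof -
    have "of_int k * \<delta> \<le> \<beta>" "\<alpha> \<le> (of_int k + 1) * \<delta>" using that unfolding K_def by auto
    then have "max \<alpha> (of_int k * \<delta>) \<in> {\<alpha>..\<beta>}" "of_int k * \<delta> \<le> max \<alpha> (of_int k * \<delta>)"
      "max \<alpha> (of_int k * \<delta>) \<le> (of_int k + 1) * \<delta>" using d ab by (auto simp: distrib_right)
    then show ?thesis using Rge[of "max \<alpha> (of_int k * \<delta>)" "max \<alpha> (of_int k * \<delta>)" k] by auto
  qed
  define S where "S = (\<lambda>t. {k\<in>K. (of_int k - 1) * \<delta> \<le> t \<and> t \<le> (of_int k + 2) * \<delta>})"
  define \<psi> where "\<psi> = (\<lambda>t. \<Sum>k\<in>K. if t \<in> {(of_int k - 1) * \<delta>..(of_int k + 2) * \<delta>} then R k else 0)"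
  have psiS: "\<psi> t = sum R (S t)" for t
    unfolding \<psi>_def S_def by (subst sum.inter_filter[OF finK, symmetric]) simp
  have SK: "S t \<subseteq> K" for t unfolding S_def by auto
  have sumS: "sum R A \<le> \<psi> t" if "A \<subseteq> S t" for A t
  proof -
    have "finite (S t)" using finite_subset[OF SK finK] .
    then show ?thesis unfolding psiS by (rule sum_mono2) (use SK that Rnn in auto)
  qed
  have flo: "of_int \<lfloor>y/\<delta>\<rfloor> * \<delta> \<le> y \<and> y < (of_int \<lfloor>y/\<delta>\<rfloor> + 1) * \<delta>" for y
  proof -
    have "of_int \<lfloor>y/\<delta>\<rfloor> \<le> y/\<delta>" "y/\<delta> < of_int \<lfloor>y/\<delta>\<rfloor> + 1" by linarith+
    then show ?thesis using d by (metis pos_le_divide_eq pos_divide_less_eq)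
  qed
  have key: "\<bar>g y - g z\<bar> \<le> \<psi> t"
    if t: "t \<in> {\<alpha>..\<beta>}" and y: "y \<in> {\<alpha>..\<beta>}" "\<bar>y - t\<bar> \<le> \<delta>" and z: "z \<in> {\<alpha>..\<beta>}" "\<bar>z - t\<bar> \<le> \<delta>"
      and yz: "y \<le> z" for t y z
  proof -
    define k1 where "k1 = \<lfloor>y/\<delta>\<rfloor>"
    define k2 where "k2 = \<lfloor>z/\<delta>\<rfloor>"
    have y1: "of_int k1 * \<delta> \<le> y" "y < (of_int k1 + 1) * \<delta>" using flo[of y] unfolding k1_def by auto
    have z1: "of_int k2 * \<delta> \<le> z" "z < (of_int k2 + 1) * \<delta>" using flo[of z] unfolding k2_def by auto
    have "k1 \<le> k2" unfolding k1_def k2_def using yz d by (intro floor_mono divide_right_mono) auto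
    have "of_int k2 * \<delta> < (of_int k1 + 3) * \<delta>" using y1 z1 y z yz by (auto simp: abs_le_iff algebra_simps)
    then have "k2 < k1 + 3" using d by simp
    have k1S: "k1 \<in> S t" unfolding S_def using inK[OF y(1) y1(1)] y1 y
      by (auto simp: abs_le_iff algebra_simps)
    have k2S: "k2 \<in> S t" unfolding S_def using inK[OF z(1) z1(1)] z1 z
      by (auto simp: abs_le_iff algebra_simps)
    consider "k2 = k1" | "k2 = k1 + 1" | "k2 = k1 + 2" using \<open>k1 \<le> k2\<close> \<open>k2 < k1 + 3\<close> by linarith
    then show ?thesis
    proof cases
      case 1
      then have "\<bar>g y - g z\<bar> \<le> R k1" using Rge[OF y(1) z(1)] y1 z1 by auto
      also have "\<dots> = sum R {k1}" by simp
      also have "\<dots> \<le> \<psi> t" by (rule sumS) (use k1S in auto)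
      finally show ?thesis .
    next
      case 2
      define p where "p = of_int k2 * \<delta>"
      have p: "p \<in> {\<alpha>..\<beta>}" using y z y1 z1 unfolding p_def 2 by (auto simp: algebra_simps)
      have "\<bar>g y - g p\<bar> \<le> R k1" using Rge[OF y(1) p] y1 unfolding p_def 2 by (auto simp: algebra_simps)
      moreover have "\<bar>g p - g z\<bar> \<le> R k2" using Rge[OF p z(1)] z1 unfolding p_def by (auto simp: algebra_simps)
      ultimately have "\<bar>g y - g z\<bar> \<le> R k1 + R k2" by linarith
      also have "\<dots> = sum R {k1, k2}" using 2 by simp
      also have "\<dots> \<le> \<psi> t" by (rule sumS) (use k1S k2S in auto)
      finally show ?thesis .
    next
      case 3
      define p1 where "p1 = (of_int k1 + 1) * \<delta>"
      define p2 where "p2 = of_int k2 * \<delta>"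
      have p1: "p1 \<in> {\<alpha>..\<beta>}" using y z y1 z1 d unfolding p1_def 3 by (auto simp: algebra_simps)
      have p2: "p2 \<in> {\<alpha>..\<beta>}" using y z y1 z1 d unfolding p2_def 3 by (auto simp: algebra_simps)
      have e1: "\<bar>g y - g p1\<bar> \<le> R k1" using Rge[OF y(1) p1] y1 unfolding p1_def by (auto simp: algebra_simps)
      have e2: "\<bar>g p1 - g p2\<bar> \<le> R (k1 + 1)" using Rge[OF p1 p2, of "k1+1"] d unfolding p1_def p2_def 3 by (simp add: algebra_simps)
      have e3: "\<bar>g p2 - g z\<bar> \<le> R k2" using Rge[OF p2 z(1)] z1 unfolding p2_def by (auto simp: algebra_simps)
      have mS: "k1 + 1 \<in> S t"
      proof -
        have "k1 + 1 \<in> K" using inK[OF p1, of "k1+1"] d unfolding p1_def by (auto simp: algebra_simps)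
        moreover have "(of_int (k1 + 1) - 1) * \<delta> \<le> t" using z z1 y1 unfolding 3 by (auto simp: abs_le_iff algebra_simps)
        moreover have "t \<le> (of_int (k1 + 1) + 2) * \<delta>" using y y1 by (auto simp: abs_le_iff algebra_simps)
        ultimately show ?thesis unfolding S_def by auto
      qed
      have "\<bar>g y - g z\<bar> \<le> R k1 + R (k1 + 1) + R k2" using e1 e2 e3 by linarith
      also have "\<dots> = sum R {k1, k1 + 1, k2}" using 3 by simp
      also have "\<dots> \<le> \<psi> t" by (rule sumS) (use k1S k2S mS in auto)
      finally show ?thesis .
    qed
  qed
  have pt: "osc \<alpha> \<beta> \<delta> t g \<le> \<psi> t" if t: "t \<in> {\<alpha>..\<beta>}" for t
  proof (rule osc_le[OF t])
    show "\<bar>t - t\<bar> \<le> \<delta>" using d by simp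
    fix y z assume yz: "y \<in> {\<alpha>..\<beta>}" "z \<in> {\<alpha>..\<beta>}" "\<bar>y - t\<bar> \<le> \<delta>" "\<bar>z - t\<bar> \<le> \<delta>"
    show "\<bar>g y - g z\<bar> \<le> \<psi> t"
    proof (cases "y \<le> z")
      case True then show ?thesis using key[OF t yz(1,3) yz(2,4)] by simp
    next
      case False then show ?thesis using key[OF t yz(2,4) yz(1,3)] by (simp add: abs_minus_commute)
    qed
  qed
  have intk: "(\<lambda>t. if t \<in> {(of_int k - 1) * \<delta>..(of_int k + 2) * \<delta>} then R k else 0) integrable_on {\<alpha>..\<beta>}
      \<and> integral {\<alpha>..\<beta>} (\<lambda>t. if t \<in> {(of_int k - 1) * \<delta>..(of_int k + 2) * \<delta>} then R k else 0) \<le> 3 * \<delta> * R k"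
    if k: "k \<in> K" for k
  proof
    let ?W = "{(of_int k - 1) * \<delta>..(of_int k + 2) * \<delta>}"
    have eq: "?W \<inter> {\<alpha>..\<beta>} = {max ((of_int k - 1) * \<delta>) \<alpha>..min ((of_int k + 2) * \<delta>) \<beta>}"
      by (simp add: Int_atLeastAtMost)
    show "(\<lambda>t. if t \<in> ?W then R k else 0) integrable_on {\<alpha>..\<beta>}"
      unfolding integrable_restrict_Int eq by (rule integrable_const_ivl)
    have "integral {\<alpha>..\<beta>} (\<lambda>t. if t \<in> ?W then R k else 0) = Henstock_Kurzweil_Integration.content (?W \<inter> {\<alpha>..\<beta>}) * R k"
      unfolding integral_restrict_Int eq integral_const_real by simp
    also have "\<dots> \<le> 3 * \<delta> * R k"
    proof (rule mult_right_mono)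
      show "0 \<le> R k" using Rnn[OF k] .
      show "Henstock_Kurzweil_Integration.content (?W \<inter> {\<alpha>..\<beta>}) \<le> 3 * \<delta>"
        unfolding eq content_real_if using d by (auto simp: algebra_simps)
    qed
    finally show "integral {\<alpha>..\<beta>} (\<lambda>t. if t \<in> ?W then R k else 0) \<le> 3 * \<delta> * R k" .
  qed
  have psi_int: "\<psi> integrable_on {\<alpha>..\<beta>}"
    unfolding \<psi>_def by (rule integrable_sum[OF finK]) (use intk in blast)
  have psi_le: "integral {\<alpha>..\<beta>} \<psi> \<le> 3 * \<delta> * (\<Sum>k\<in>K. R k)"
  proof -
    have "integral {\<alpha>..\<beta>} \<psi> = (\<Sum>k\<in>K. integral {\<alpha>..\<beta>} (\<lambda>t. if t \<in> {(of_int k - 1) * \<delta>..(of_int k + 2) * \<delta>} then R k else 0))"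
      unfolding \<psi>_def by (rule integral_sum[OF finK]) (use intk in blast)
    also have "\<dots> \<le> (\<Sum>k\<in>K. 3 * \<delta> * R k)" by (rule sum_mono) (use intk in blast)
    also have "\<dots> = 3 * \<delta> * (\<Sum>k\<in>K. R k)" by (simp add: sum_distrib_left)
    finally show ?thesis .
  qed
  show "Var \<alpha> \<beta> \<delta> g \<le> 3 * \<delta> * (\<Sum>k\<in>K. R k)"
  proof (cases "(\<lambda>t. osc \<alpha> \<beta> \<delta> t g) integrable_on {\<alpha>..\<beta>}")
    case True
    have "Var \<alpha> \<beta> \<delta> g \<le> integral {\<alpha>..\<beta>} \<psi>"
      unfolding Var_def by (rule integral_le[OF True psi_int]) (use pt in blast)
    then show ?thesis using psi_le by linarith
  next
    case False
    then have "Var \<alpha> \<beta> \<delta> g = 0" unfolding Var_def by (rule not_integrable_integral)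
    moreover have "0 \<le> (\<Sum>k\<in>K. R k)" by (rule sum_nonneg) (use Rnn in blast)
    ultimately show ?thesis using d by simp
  qed
qed

definition sec :: "('a::euclidean_space \<Rightarrow> real) \<Rightarrow> 'a \<Rightarrow> 'a \<Rightarrow> real \<Rightarrow> real" where
  "sec f x e t = f (x + (t - x \<bullet> e) *\<^sub>R e)"

lemma line_inner:
  fixes x :: "'a::euclidean_space"
  assumes "e \<in> Basis" "e' \<in> Basis"
  shows "(x + (t - x \<bullet> e) *\<^sub>R e) \<bullet> e' = (if e' = e then t else x \<bullet> e')"
  using assms by (auto simp: inner_add_left inner_Basis)

lemma line_in_box:
  fixes x :: "'a::euclidean_space"
  assumes "e \<in> Basis" "x \<in> cbox a b" "t \<in> {a \<bullet> e..b \<bullet> e}"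
  shows "x + (t - x \<bullet> e) *\<^sub>R e \<in> cbox a b"
  using assms unfolding mem_box by (auto simp: line_inner)

lemma sec_cont:
  fixes f :: "'a::euclidean_space \<Rightarrow> real"
  assumes "continuous_on (cbox a b) f" "e \<in> Basis" "x \<in> cbox a b"
  shows "continuous_on {a \<bullet> e..b \<bullet> e} (sec f x e)"
proof -
  have "continuous_on {a \<bullet> e..b \<bullet> e} (\<lambda>t. x + (t - x \<bullet> e) *\<^sub>R e)"
    by (intro continuous_intros)
  moreover have "(\<lambda>t. x + (t - x \<bullet> e) *\<^sub>R e) ` {a \<bullet> e..b \<bullet> e} \<subseteq> cbox a b"
    using line_in_box[OF assms(2,3)] by blast
  ultimately show ?thesis unfolding sec_def
    using continuous_on_compose2[OF assms(1)] by blast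
qed

lemma sec_bound:
  fixes f :: "'a::euclidean_space \<Rightarrow> real"
  assumes "\<And>x. x \<in> cbox a b \<Longrightarrow> \<bar>f x\<bar> \<le> M" "e \<in> Basis" "x \<in> cbox a b"
  shows "\<And>t. t \<in> {a \<bullet> e..b \<bullet> e} \<Longrightarrow> \<bar>sec f x e t\<bar> \<le> M"
  unfolding sec_def using assms line_in_box by blast

lemma gset_sub:
  fixes f :: "'a::euclidean_space \<Rightarrow> real"
  assumes d: "0 < \<delta>" and M: "\<And>x. x \<in> cbox a b \<Longrightarrow> \<bar>f x\<bar> \<le> M"
  shows "gset \<delta> (cbox a b) f \<subseteq> (Pi\<^sub>E Basis (\<lambda>e. {\<lceil>a \<bullet> e/\<delta>\<rceil> - 1..\<lfloor>b \<bullet> e/\<delta>\<rfloor>})) \<times> {\<lceil>-M/\<delta>\<rceil> - 1..\<lfloor>M/\<delta>\<rfloor>}"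
proof
  fix p assume "p \<in> gset \<delta> (cbox a b) f"
  then obtain m j x where p: "p = (m, j)" "m \<in> Basis \<rightarrow>\<^sub>E UNIV" "x \<in> cbox a b" "cell \<delta> m x"
    "of_int j * \<delta> \<le> f x" "f x \<le> (of_int j + 1) * \<delta>" unfolding gset_def by blast
  have "m \<in> Pi\<^sub>E Basis (\<lambda>e. {\<lceil>a \<bullet> e/\<delta>\<rceil> - 1..\<lfloor>b \<bullet> e/\<delta>\<rfloor>})"
  proof -
    have "m e \<in> {\<lceil>a \<bullet> e/\<delta>\<rceil> - 1..\<lfloor>b \<bullet> e/\<delta>\<rfloor>}" if e: "e \<in> Basis" for e
    proof -
      have "of_int (m e) * \<delta> \<le> x \<bullet> e" "x \<bullet> e \<le> (of_int (m e) + 1) * \<delta>" using p(4) e unfolding cell_def by auto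
      moreover have "a \<bullet> e \<le> x \<bullet> e" "x \<bullet> e \<le> b \<bullet> e" using p(3) e unfolding mem_box by auto
      ultimately have "of_int (m e) * \<delta> \<le> b \<bullet> e" "a \<bullet> e \<le> (of_int (m e) + 1) * \<delta>" by linarith+
      then show ?thesis using int_le_floor_div[OF d] ceil_div_le[OF d] by simp
    qed
    then show ?thesis using p(2) unfolding PiE_def by auto
  qed
  moreover have "j \<in> {\<lceil>-M/\<delta>\<rceil> - 1..\<lfloor>M/\<delta>\<rfloor>}"
    using js_sub[OF d, of "cbox a b" f M] M p(3,5,6) by blast
  ultimately show "p \<in> (Pi\<^sub>E Basis (\<lambda>e. {\<lceil>a \<bullet> e/\<delta>\<rceil> - 1..\<lfloor>b \<bullet> e/\<delta>\<rfloor>})) \<times> {\<lceil>-M/\<delta>\<rceil> - 1..\<lfloor>M/\<delta>\<rfloor>}"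
    using p(1) by blast
qed

lemma gset_finite:
  fixes f :: "'a::euclidean_space \<Rightarrow> real"
  assumes d: "0 < \<delta>" and M: "\<And>x. x \<in> cbox a b \<Longrightarrow> \<bar>f x\<bar> \<le> M"
  shows "finite (gset \<delta> (cbox a b) f)"
  by (rule finite_subset[OF gset_sub[OF d M]]) (auto intro!: finite_cartesian_product finite_PiE)

lemma win_iff: "\<bar>y - (of_int k + 1/2) * \<delta>\<bar> \<le> \<delta>/2 \<longleftrightarrow> of_int k * \<delta> \<le> y \<and> y \<le> (of_int k + 1) * (\<delta>::real)"
proof -
  have e: "(of_int k + 1/2) * \<delta> = of_int k * \<delta> + \<delta>/2" by (simp add: algebra_simps)
  show ?thesis unfolding e abs_le_iff distrib_right by auto
qed

lemma lower_fixed: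
  fixes f :: "'a::euclidean_space \<Rightarrow> real"
  assumes ab: "\<And>e. e \<in> Basis \<Longrightarrow> a \<bullet> e < b \<bullet> e"
    and cont: "continuous_on (cbox a b) f" and e0: "e0 \<in> Basis" and d: "0 < \<delta>"
    and A1: "A \<subseteq> {x \<in> cbox a b. x \<bullet> e0 = a \<bullet> e0}" and A2: "{x \<in> cbox a b. x \<bullet> e0 = a \<bullet> e0} \<subseteq> closure A"
    and C: "0 \<le> C" and V: "\<And>x. x \<in> A \<Longrightarrow> C \<le> Var (a \<bullet> e0) (b \<bullet> e0) \<delta> (sec f x e0)"
  shows "(\<Prod>e\<in>Basis-{e0}. (b \<bullet> e - a \<bullet> e) / \<delta>) * (C / (3 * \<delta>^2)) \<le> real (card (gset \<delta> (cbox a b) f))"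
proof -
  obtain M where M: "\<And>x. x \<in> cbox a b \<Longrightarrow> \<bar>f x\<bar> \<le> M"
    using cont_bounded[OF cont compact_cbox] by blast
  define \<alpha> where "\<alpha> = a \<bullet> e0"
  define \<beta> where "\<beta> = b \<bullet> e0"
  have \<alpha>\<beta>: "\<alpha> \<le> \<beta>" using ab[OF e0] unfolding \<alpha>_def \<beta>_def by simp
  define B' where "B' = (Basis - {e0} :: 'a set)"
  define Ge where "Ge = (\<lambda>e::'a. {\<lfloor>a \<bullet> e/\<delta>\<rfloor>..\<lceil>b \<bullet> e/\<delta>\<rceil> - 1})"
  define GP where "GP = Pi\<^sub>E B' Ge"
  define K where "K = {k::int. of_int k * \<delta> \<le> \<beta> \<and> \<alpha> \<le> (of_int k + 1) * \<delta>}"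
  define R where "R = (\<lambda>x (k::int). osc \<alpha> \<beta> (\<delta>/2) ((of_int k + 1/2) * \<delta>) (sec f x e0))"
  define G where "G = gset \<delta> (cbox a b) f"
  define col where "col = (\<lambda>m. {j. (m, j) \<in> G})"
  have finB': "finite B'" unfolding B'_def by simp
  have finGP: "finite GP" unfolding GP_def Ge_def using finB' by (intro finite_PiE) auto
  have finG: "finite G" unfolding G_def by (rule gset_finite[of \<delta> a b f M, OF d M])
  have colsub: "col m \<subseteq> {\<lceil>-M/\<delta>\<rceil> - 1..\<lfloor>M/\<delta>\<rfloor>}" for m
    using gset_sub[of \<delta> a b f M, OF d M] unfolding col_def G_def by blast
  have fincol: "finite (col m)" for m by (rule finite_subset[OF colsub]) simp
  have ex: "\<exists>x\<in>A. \<forall>e\<in>B'. of_int (P e) * \<delta> < x \<bullet> e \<and> x \<bullet> e < (of_int (P e) + 1) * \<delta>" if P: "P \<in> GP" for P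
  proof -
    define mid where "mid = (\<lambda>e. (max (of_int (P e) * \<delta>) (a \<bullet> e) + min ((of_int (P e) + 1) * \<delta>) (b \<bullet> e)) / 2)"
    have lt: "max (of_int (P e) * \<delta>) (a \<bullet> e) < min ((of_int (P e) + 1) * \<delta>) (b \<bullet> e)" if e: "e \<in> B'" for e
    proof -
      have eB: "e \<in> Basis" using e unfolding B'_def by simp
      have Pe: "\<lfloor>a \<bullet> e/\<delta>\<rfloor> \<le> P e" "P e \<le> \<lceil>b \<bullet> e/\<delta>\<rceil> - 1" using P e unfolding GP_def Ge_def by auto
      have "real_of_int (P e) < b \<bullet> e / \<delta>"
      proof -
        have "real_of_int (P e) \<le> real_of_int \<lceil>b \<bullet> e/\<delta>\<rceil> - 1" using Pe(2) by linarith
        moreover have "real_of_int \<lceil>b \<bullet> e/\<delta>\<rceil> < b \<bullet> e / \<delta> + 1" by linarith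
        ultimately show ?thesis by linarith
      qed
      then have 1: "of_int (P e) * \<delta> < b \<bullet> e" using d by (simp add: pos_less_divide_eq)
      have "a \<bullet> e / \<delta> < real_of_int (P e) + 1"
      proof -
        have "a \<bullet> e / \<delta> < real_of_int \<lfloor>a \<bullet> e/\<delta>\<rfloor> + 1" by linarith
        then show ?thesis using Pe(1) by linarith
      qed
      then have 2: "a \<bullet> e < (of_int (P e) + 1) * \<delta>" using d by (simp add: pos_divide_less_eq)
      have 3: "of_int (P e) * \<delta> < (of_int (P e) + 1) * \<delta>" using d by (simp add: distrib_right)
      show ?thesis using 1 2 3 ab[OF eB] by simp
    qed
    define y where "y = (\<Sum>e\<in>Basis. (if e = e0 then a \<bullet> e0 else mid e) *\<^sub>R e)"
    have yi: "y \<bullet> e = (if e = e0 then a \<bullet> e0 else mid e)" if "e \<in> Basis" for e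
      unfolding y_def using that by (rule inner_sum_left_Basis)
    have ybox: "y \<in> cbox a b"
      unfolding mem_box
    proof
      fix e :: 'a assume e: "e \<in> Basis"
      show "a \<bullet> e \<le> y \<bullet> e \<and> y \<bullet> e \<le> b \<bullet> e"
      proof (cases "e = e0")
        case True then show ?thesis using yi[OF e] ab[OF e] by simp
      next
        case False
        then have "e \<in> B'" using e unfolding B'_def by simp
        then show ?thesis using yi[OF e] lt[of e] False unfolding mid_def by auto
      qed
    qed
    have yface: "y \<in> {x \<in> cbox a b. x \<bullet> e0 = a \<bullet> e0}" using ybox yi[OF e0] by simp
    define U where "U = (\<Inter>e\<in>B'. {x::'a. of_int (P e) * \<delta> < x \<bullet> e} \<inter> {x. x \<bullet> e < (of_int (P e) + 1) * \<delta>})"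
    have openU: "open U" unfolding U_def
      by (intro open_INT finB' ballI open_Int open_halfspace_component_gt open_halfspace_component_lt)
    have yU: "y \<in> U" unfolding U_def
    proof
      fix e assume e: "e \<in> B'"
      then have eB: "e \<in> Basis" "e \<noteq> e0" unfolding B'_def by auto
      show "y \<in> {x::'a. of_int (P e) * \<delta> < x \<bullet> e} \<inter> {x. x \<bullet> e < (of_int (P e) + 1) * \<delta>}"
        using yi[OF eB(1)] eB(2) lt[OF e] unfolding mid_def by auto
    qed
    have "U \<inter> closure A \<noteq> {}" using yU yface A2 by blast
    then have "U \<inter> A \<noteq> {}" using open_Int_closure_eq_empty[OF openU] by blast
    then obtain x where "x \<in> A" "x \<in> U" by blast
    then show ?thesis unfolding U_def by blast
  qed
  obtain xp where xp: "\<And>P. P \<in> GP \<Longrightarrow> xp P \<in> A \<and> (\<forall>e\<in>B'. of_int (P e) * \<delta> < xp P \<bullet> e \<and> xp P \<bullet> e < (of_int (P e) + 1) * \<delta>)"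
    using ex by metis
  have xpbox: "xp P \<in> cbox a b" if "P \<in> GP" for P using xp[OF that] A1 by blast
  have colb: "R (xp P) k \<le> \<delta> * real (card (col (P(e0 := k))))" if P: "P \<in> GP" and k: "k \<in> K" for P k
  proof -
    define x where "x = xp P"
    define g where "g = sec f x e0"
    have x: "x \<in> cbox a b" unfolding x_def by (rule xpbox[OF P])
    define u where "u = max \<alpha> (of_int k * \<delta>)"
    define v where "v = min \<beta> ((of_int k + 1) * \<delta>)"
    have kk: "of_int k * \<delta> \<le> \<beta>" "\<alpha> \<le> (of_int k + 1) * \<delta>" using k unfolding K_def by auto
    have uv: "u \<le> v" unfolding u_def v_def using kk \<alpha>\<beta> d by (auto simp: distrib_right)
    have uvsub: "{u..v} \<subseteq> {\<alpha>..\<beta>}" unfolding u_def v_def by auto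
    have gcont: "continuous_on {u..v} g"
      unfolding g_def using continuous_on_subset[OF sec_cont[OF cont e0 x]] uvsub unfolding \<alpha>_def \<beta>_def by blast
    have gM: "\<And>t. t \<in> {u..v} \<Longrightarrow> \<bar>g t\<bar> \<le> M"
      using sec_bound[of a b f M, OF M e0 x] uvsub unfolding g_def \<alpha>_def \<beta>_def by blast
    define J1 where "J1 = {j::int. \<exists>t\<in>{u..v}. of_int j * \<delta> \<le> g t \<and> g t \<le> (of_int j + 1) * \<delta>}"
    have finJ1: "finite J1" unfolding J1_def by (rule js_finite[of \<delta> "{u..v}" g M, OF d gM])
    have mPi: "P(e0 := k) \<in> Basis \<rightarrow>\<^sub>E (UNIV::int set)"
      using P e0 unfolding GP_def B'_def PiE_def extensional_def by auto
    have J1sub: "J1 \<subseteq> col (P(e0 := k))"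
    proof
      fix j assume "j \<in> J1"
      then obtain t where t: "t \<in> {u..v}" "of_int j * \<delta> \<le> g t" "g t \<le> (of_int j + 1) * \<delta>"
        unfolding J1_def by blast
      define y where "y = x + (t - x \<bullet> e0) *\<^sub>R e0"
      have tab: "t \<in> {a \<bullet> e0..b \<bullet> e0}" using t(1) uvsub unfolding \<alpha>_def \<beta>_def by blast
      have ybox: "y \<in> cbox a b" unfolding y_def by (rule line_in_box[OF e0 x tab])
      have fy: "f y = g t" unfolding y_def g_def sec_def ..
      have "cell \<delta> (P(e0 := k)) y" unfolding cell_def
      proof
        fix e :: 'a assume e: "e \<in> Basis"
        show "of_int ((P(e0 := k)) e) * \<delta> \<le> y \<bullet> e \<and> y \<bullet> e \<le> (of_int ((P(e0 := k)) e) + 1) * \<delta>"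
        proof (cases "e = e0")
          case True
          then show ?thesis using t(1) unfolding y_def line_inner[OF e0 e] u_def v_def by auto
        next
          case False
          then have "e \<in> B'" using e unfolding B'_def by simp
          then show ?thesis using xp[OF P] False unfolding y_def line_inner[OF e0 e] x_def by auto
        qed
      qed
      then show "j \<in> col (P(e0 := k))" unfolding col_def G_def gset_def using mPi ybox fy t by auto
    qed
    have "R (xp P) k \<le> \<delta> * real (card J1)"
      unfolding R_def x_def[symmetric] g_def[symmetric]
    proof (rule osc_le[of u])
      show "u \<in> {\<alpha>..\<beta>}" using uv uvsub by auto
      show "\<bar>u - (of_int k + 1 / 2) * \<delta>\<bar> \<le> \<delta> / 2"
        unfolding win_iff using kk d \<alpha>\<beta> unfolding u_def by (auto simp: distrib_right)
      fix y z assume yz: "y \<in> {\<alpha>..\<beta>}" "z \<in> {\<alpha>..\<beta>}" "\<bar>y - (of_int k + 1 / 2) * \<delta>\<bar> \<le> \<delta> / 2"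
        "\<bar>z - (of_int k + 1 / 2) * \<delta>\<bar> \<le> \<delta> / 2"
      have "y \<in> {u..v}" "z \<in> {u..v}" using yz unfolding u_def v_def win_iff by auto
      then show "\<bar>g y - g z\<bar> \<le> \<delta> * real (card J1)"
        unfolding J1_def by (rule col_count[OF gcont d]) (use finJ1 in \<open>simp add: J1_def\<close>)
    qed
    also have "\<dots> \<le> \<delta> * real (card (col (P(e0 := k))))"
      using card_mono[OF fincol J1sub] d by simp
    finally show ?thesis .
  qed
  have finK: "finite K"
    unfolding K_def by (rule var_bound(1)[of \<alpha> \<beta> "\<lambda>_. 0::real" 0 \<delta>]) (use d \<alpha>\<beta> in auto)
  have varb: "C / (3 * \<delta>^2) \<le> (\<Sum>k\<in>K. real (card (col (P(e0 := k)))))" if P: "P \<in> GP" for P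
  proof -
    have x: "xp P \<in> cbox a b" by (rule xpbox[OF P])
    have xA: "xp P \<in> A" using xp[OF P] by blast
    have gM: "\<And>t. t \<in> {\<alpha>..\<beta>} \<Longrightarrow> \<bar>sec f (xp P) e0 t\<bar> \<le> M"
      using sec_bound[of a b f M, OF M e0 x] unfolding \<alpha>_def \<beta>_def by blast
    have vb: "Var \<alpha> \<beta> \<delta> (sec f (xp P) e0) \<le> 3 * \<delta> * (\<Sum>k\<in>K. R (xp P) k)"
      using var_bound(2)[of \<alpha> \<beta> "sec f (xp P) e0" M \<delta>, OF gM d \<alpha>\<beta>] unfolding K_def R_def by simp
    have "(\<Sum>k\<in>K. R (xp P) k) \<le> (\<Sum>k\<in>K. \<delta> * real (card (col (P(e0 := k)))))"
      by (rule sum_mono) (rule colb[OF P])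
    also have "\<dots> = \<delta> * (\<Sum>k\<in>K. real (card (col (P(e0 := k)))))" by (simp add: sum_distrib_left)
    finally have "C \<le> 3 * \<delta> * (\<delta> * (\<Sum>k\<in>K. real (card (col (P(e0 := k))))))"
      using V[OF xA] vb d unfolding \<alpha>_def \<beta>_def by (smt (verit) mult_left_mono)
    then have "C \<le> (3 * \<delta>^2) * (\<Sum>k\<in>K. real (card (col (P(e0 := k)))))"
      by (simp add: power2_eq_square algebra_simps)
    then show ?thesis using d by (simp add: pos_divide_le_eq mult.commute)
  qed
  define \<Phi> where "\<Phi> = (\<lambda>(P::'a \<Rightarrow> int, k::int). P(e0 := k))"
  have inj: "inj_on \<Phi> (GP \<times> K)"
  proof (rule inj_onI)
    fix p q assume p: "p \<in> GP \<times> K" and q: "q \<in> GP \<times> K" and eq: "\<Phi> p = \<Phi> q"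
    obtain P k where Pk: "p = (P, k)" by (cases p)
    obtain P' k' where Pk': "q = (P', k')" by (cases q)
    have PP: "P \<in> GP" "P' \<in> GP" using p q Pk Pk' by auto
    have e: "P(e0 := k) = P'(e0 := k')" using eq unfolding \<Phi>_def Pk Pk' by simp
    then have "k = k'" by (metis fun_upd_same)
    moreover have "P = P'"
    proof
      fix e show "P e = P' e"
      proof (cases "e = e0")
        case True
        then have "e \<notin> B'" unfolding B'_def by simp
        then show ?thesis using PP unfolding GP_def PiE_def extensional_def by auto
      next
        case False then show ?thesis using e by (metis fun_upd_other)
      qed
    qed
    ultimately show "p = q" using Pk Pk' by simp
  qed
  have finGC: "finite (\<Phi> ` (GP \<times> K))" using finGP finK by simp
  have sub: "Sigma (\<Phi> ` (GP \<times> K)) col \<subseteq> G" unfolding col_def by auto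
  have "card (Sigma (\<Phi> ` (GP \<times> K)) col) = (\<Sum>m\<in>\<Phi> ` (GP \<times> K). card (col m))"
    by (rule card_SigmaI[OF finGC]) (use fincol in blast)
  also have "\<dots> = (\<Sum>p\<in>GP \<times> K. card (col (\<Phi> p)))"
    using sum.reindex[OF inj, of "\<lambda>m. card (col m)"] by simp
  also have "\<dots> = (\<Sum>P\<in>GP. \<Sum>k\<in>K. card (col (P(e0 := k))))"
    unfolding \<Phi>_def sum.cartesian_product by (rule sum.cong) (auto split: prod.splits)
  finally have cardeq: "card (Sigma (\<Phi> ` (GP \<times> K)) col) = (\<Sum>P\<in>GP. \<Sum>k\<in>K. card (col (P(e0 := k))))" .
  have "real (card GP) * (C / (3 * \<delta>^2)) = (\<Sum>P\<in>GP. C / (3 * \<delta>^2))" by simp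
  also have "\<dots> \<le> (\<Sum>P\<in>GP. \<Sum>k\<in>K. real (card (col (P(e0 := k)))))"
    by (rule sum_mono) (rule varb)
  also have "\<dots> = real (card (Sigma (\<Phi> ` (GP \<times> K)) col))" unfolding cardeq by simp
  also have "\<dots> \<le> real (card G)" using card_mono[OF finG sub] by simp
  finally have main: "real (card GP) * (C / (3 * \<delta>^2)) \<le> real (card G)" .
  have cardGP: "(\<Prod>e\<in>Basis-{e0}. (b \<bullet> e - a \<bullet> e) / \<delta>) \<le> real (card GP)"
  proof -
    have "real (card GP) = (\<Prod>e\<in>B'. real (card (Ge e)))"
      unfolding GP_def card_PiE[OF finB'] by simp
    moreover have "(\<Prod>e\<in>B'. (b \<bullet> e - a \<bullet> e) / \<delta>) \<le> (\<Prod>e\<in>B'. real (card (Ge e)))"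
    proof (rule prod_mono)
      fix e assume e: "e \<in> B'"
      then have eB: "e \<in> Basis" unfolding B'_def by simp
      have pos: "0 \<le> (b \<bullet> e - a \<bullet> e) / \<delta>" using ab[OF eB] d by simp
      have "(b \<bullet> e - a \<bullet> e) / \<delta> = b \<bullet> e / \<delta> - a \<bullet> e / \<delta>" by (simp add: diff_divide_distrib)
      moreover have "b \<bullet> e / \<delta> \<le> real_of_int \<lceil>b \<bullet> e / \<delta>\<rceil>" by linarith
      moreover have "real_of_int \<lfloor>a \<bullet> e / \<delta>\<rfloor> \<le> a \<bullet> e / \<delta>" by linarith
      ultimately have le: "(b \<bullet> e - a \<bullet> e) / \<delta> \<le> real_of_int (\<lceil>b \<bullet> e / \<delta>\<rceil> - \<lfloor>a \<bullet> e / \<delta>\<rfloor>)" unfolding of_int_diff by linarith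
      have "real (card (Ge e)) = real (nat (\<lceil>b \<bullet> e / \<delta>\<rceil> - \<lfloor>a \<bullet> e / \<delta>\<rfloor>))" unfolding Ge_def by simp
      also have "\<dots> \<ge> real_of_int (\<lceil>b \<bullet> e / \<delta>\<rceil> - \<lfloor>a \<bullet> e / \<delta>\<rfloor>)" by linarith
      finally show "0 \<le> (b \<bullet> e - a \<bullet> e) / \<delta> \<and> (b \<bullet> e - a \<bullet> e) / \<delta> \<le> real (card (Ge e))"
        using pos le by linarith
    qed
    ultimately show ?thesis unfolding B'_def by simp
  qed
  have "0 \<le> C / (3 * \<delta>^2)" using C d by simp
  then have "(\<Prod>e\<in>Basis-{e0}. (b \<bullet> e - a \<bullet> e) / \<delta>) * (C / (3 * \<delta>^2)) \<le> real (card GP) * (C / (3 * \<delta>^2))"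
    by (rule mult_right_mono[OF cardGP])
  then show ?thesis using main unfolding G_def by linarith
qed

lemma inner_partial:
  fixes c :: "'a::euclidean_space \<Rightarrow> real"
  assumes "S \<subseteq> Basis" "e' \<in> Basis"
  shows "(\<Sum>e\<in>S. c e *\<^sub>R e) \<bullet> e' = (if e' \<in> S then c e' else 0)"
proof -
  have fin: "finite S" using finite_subset[OF assms(1) finite_Basis] .
  have "(\<Sum>e\<in>S. c e *\<^sub>R e) \<bullet> e' = (\<Sum>e\<in>S. c e * (e \<bullet> e'))" by (simp add: inner_sum_left)
  also have "\<dots> = (\<Sum>e\<in>S. if e = e' then c e else 0)"
    by (rule sum.cong) (use assms in \<open>auto simp: inner_Basis\<close>)
  also have "\<dots> = (if e' \<in> S then c e' else 0)" using fin by (simp add: sum.delta')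
  finally show ?thesis .
qed

lemma path_bound:
  fixes f :: "'a::euclidean_space \<Rightarrow> real"
  assumes M: "\<And>x. x \<in> cbox a b \<Longrightarrow> \<bar>f x\<bar> \<le> M"
    and O: "\<And>e x t. e \<in> Basis \<Longrightarrow> x \<in> cbox a b \<Longrightarrow> t \<in> {a \<bullet> e..b \<bullet> e} \<Longrightarrow> osc (a \<bullet> e) (b \<bullet> e) \<delta> t (sec f x e) \<le> D e"
    and p: "p \<in> cbox a b" and q: "q \<in> cbox a b" and pq: "\<And>e. e \<in> Basis \<Longrightarrow> \<bar>p \<bullet> e - q \<bullet> e\<bar> \<le> \<delta>"
  shows "\<bar>f p - f q\<bar> \<le> (\<Sum>e\<in>Basis. D e)"
proof -
  define qs where "qs = (\<lambda>S. q + (\<Sum>e\<in>S. (p \<bullet> e - q \<bullet> e) *\<^sub>R e))"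
  have qsi: "qs S \<bullet> e' = (if e' \<in> S then p \<bullet> e' else q \<bullet> e')" if "S \<subseteq> Basis" "e' \<in> Basis" for S e'
    unfolding qs_def inner_add_left inner_partial[OF that] by simp
  have qsbox: "qs S \<in> cbox a b" if "S \<subseteq> Basis" for S
    unfolding mem_box using qsi[OF that] p q unfolding mem_box by auto
  have ind: "S \<subseteq> Basis \<Longrightarrow> \<bar>f (qs S) - f q\<bar> \<le> (\<Sum>e\<in>S. D e)" if fin: "finite S" for S
    using fin
  proof (induction S rule: finite_induct)
    case empty then show ?case unfolding qs_def by simp
  next
    case (insert e S)
    have S: "S \<subseteq> Basis" and e: "e \<in> Basis" using insert.prems by auto
    have qe: "qs S \<bullet> e = q \<bullet> e" using qsi[OF S e] insert.hyps(2) by simp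
    have eq1: "qs (insert e S) = qs S + (p \<bullet> e - qs S \<bullet> e) *\<^sub>R e"
      unfolding qe unfolding qs_def using insert.hyps by (simp add: algebra_simps)
    have fins: "f (qs (insert e S)) = sec f (qs S) e (p \<bullet> e)" unfolding eq1 sec_def ..
    have fqs: "f (qs S) = sec f (qs S) e (q \<bullet> e)" unfolding sec_def qe[symmetric] by simp
    have qS: "qs S \<in> cbox a b" by (rule qsbox[OF S])
    have pe: "p \<bullet> e \<in> {a \<bullet> e..b \<bullet> e}" and qe': "q \<bullet> e \<in> {a \<bullet> e..b \<bullet> e}" using p q e unfolding mem_box by auto
    have "\<bar>f (qs (insert e S)) - f (qs S)\<bar> \<le> osc (a \<bullet> e) (b \<bullet> e) \<delta> (q \<bullet> e) (sec f (qs S) e)"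
      unfolding fins fqs
      by (rule osc_ge[OF sec_bound[of a b f M, OF M e qS] pe _ qe']) (use pq[OF e] in auto)
    also have "\<dots> \<le> D e" by (rule O[OF e qS qe'])
    finally have "\<bar>f (qs (insert e S)) - f (qs S)\<bar> \<le> D e" .
    moreover have "\<bar>f (qs S) - f q\<bar> \<le> (\<Sum>e\<in>S. D e)" using insert.IH S by blast
    ultimately show ?case using insert.hyps by simp
  qed
  have "qs Basis = p"
  proof -
    have "(\<Sum>e\<in>Basis. (p \<bullet> e - q \<bullet> e) *\<^sub>R e) = p - q"
      using euclidean_representation[of "p - q"] by (simp add: inner_diff_left)
    then show ?thesis unfolding qs_def by simp
  qed
  then show ?thesis using ind[of Basis] by simp
qed

lemma real_nat_le: "real_of_int z \<le> r \<Longrightarrow> 0 \<le> r \<Longrightarrow> real (nat z) \<le> r"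
  by (cases "0 \<le> z") auto

lemma upper_fixed:
  fixes f :: "'a::euclidean_space \<Rightarrow> real"
  assumes ab: "\<And>e. e \<in> Basis \<Longrightarrow> a \<bullet> e < b \<bullet> e"
    and cont: "continuous_on (cbox a b) f" and d: "0 < \<delta>"
    and O: "\<And>e x t. e \<in> Basis \<Longrightarrow> x \<in> cbox a b \<Longrightarrow> t \<in> {a \<bullet> e..b \<bullet> e} \<Longrightarrow> osc (a \<bullet> e) (b \<bullet> e) \<delta> t (sec f x e) \<le> D e"
    and Dnn: "\<And>e. e \<in> Basis \<Longrightarrow> 0 \<le> D e"
  shows "real (card (gset \<delta> (cbox a b) f)) \<le> (\<Prod>e\<in>Basis. (b \<bullet> e - a \<bullet> e) / \<delta> + 2) * (2 * (\<Sum>e\<in>Basis. D e) / \<delta> + 2)"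
proof -
  obtain M where M: "\<And>x. x \<in> cbox a b \<Longrightarrow> \<bar>f x\<bar> \<le> M"
    using cont_bounded[OF cont compact_cbox] by blast
  define Dt where "Dt = (\<Sum>e\<in>Basis. D e)"
  have Dt: "0 \<le> Dt" unfolding Dt_def by (rule sum_nonneg) (use Dnn in auto)
  define G where "G = gset \<delta> (cbox a b) f"
  define col where "col = (\<lambda>m. {j. (m, j) \<in> G})"
  define Cols where "Cols = Pi\<^sub>E Basis (\<lambda>e::'a. {\<lceil>a \<bullet> e/\<delta>\<rceil> - 1..\<lfloor>b \<bullet> e/\<delta>\<rfloor>})"
  have finCols: "finite Cols" unfolding Cols_def by (intro finite_PiE) auto
  have Gsub: "G \<subseteq> Cols \<times> {\<lceil>-M/\<delta>\<rceil> - 1..\<lfloor>M/\<delta>\<rfloor>}" unfolding G_def Cols_def by (rule gset_sub[of \<delta> a b f M, OF d M])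
  have fincol: "finite (col m)" for m
    by (rule finite_subset[of _ "{\<lceil>-M/\<delta>\<rceil> - 1..\<lfloor>M/\<delta>\<rfloor>}"]) (use Gsub in \<open>auto simp: col_def\<close>)
  have colb: "real (card (col m)) \<le> 2 * Dt / \<delta> + 2" for m
  proof (cases "col m = {}")
    case True then show ?thesis using Dt d by simp
  next
    case False
    then obtain j0 where "j0 \<in> col m" by blast
    then obtain q where q: "q \<in> cbox a b" "cell \<delta> m q" unfolding col_def G_def gset_def by blast
    have sub: "col m \<subseteq> {\<lceil>(f q - Dt)/\<delta>\<rceil> - 1..\<lfloor>(f q + Dt)/\<delta>\<rfloor>}"
    proof
      fix j assume "j \<in> col m"
      then obtain y where y: "y \<in> cbox a b" "cell \<delta> m y" "of_int j * \<delta> \<le> f y" "f y \<le> (of_int j + 1) * \<delta>"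
        unfolding col_def G_def gset_def by blast
      have "\<bar>f y - f q\<bar> \<le> Dt" unfolding Dt_def
      proof (rule path_bound[of a b f M \<delta> D, OF M O y(1) q(1)])
        fix e :: 'a assume e: "e \<in> Basis"
        have "of_int (m e) * \<delta> \<le> y \<bullet> e" "y \<bullet> e \<le> (of_int (m e) + 1) * \<delta>"
          "of_int (m e) * \<delta> \<le> q \<bullet> e" "q \<bullet> e \<le> (of_int (m e) + 1) * \<delta>"
          using y(2) q(2) e unfolding cell_def by auto
        then show "\<bar>y \<bullet> e - q \<bullet> e\<bar> \<le> \<delta>" unfolding abs_le_iff distrib_right by simp
      qed (auto simp: O)
      then have "of_int j * \<delta> \<le> f q + Dt" "f q - Dt \<le> (of_int j + 1) * \<delta>" using y by (auto simp: abs_le_iff)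
      then have "j \<le> \<lfloor>(f q + Dt)/\<delta>\<rfloor>" "\<lceil>(f q - Dt)/\<delta>\<rceil> - 1 \<le> j"
        using int_le_floor_div[OF d, of j "f q + Dt"] ceil_div_le[OF d, of "f q - Dt" j] by blast+
      then show "j \<in> {\<lceil>(f q - Dt)/\<delta>\<rceil> - 1..\<lfloor>(f q + Dt)/\<delta>\<rfloor>}" by simp
    qed
    have "real (card (col m)) \<le> real (card {\<lceil>(f q - Dt)/\<delta>\<rceil> - 1..\<lfloor>(f q + Dt)/\<delta>\<rfloor>})"
      using card_mono[OF finite_atLeastAtMost_int sub] by simp
    also have "\<dots> = real (nat (\<lfloor>(f q + Dt)/\<delta>\<rfloor> - \<lceil>(f q - Dt)/\<delta>\<rceil> + 2))" by simp
    also have "\<dots> \<le> 2 * Dt / \<delta> + 2"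
    proof -
      have "real_of_int \<lfloor>(f q + Dt)/\<delta>\<rfloor> \<le> (f q + Dt)/\<delta>" by linarith
      moreover have "(f q - Dt)/\<delta> \<le> real_of_int \<lceil>(f q - Dt)/\<delta>\<rceil>" by linarith
      moreover have "(f q + Dt)/\<delta> - (f q - Dt)/\<delta> = 2 * Dt / \<delta>" by (simp add: diff_divide_distrib[symmetric])
      moreover have "0 \<le> 2 * Dt / \<delta>" using Dt d by simp
      ultimately have "real_of_int (\<lfloor>(f q + Dt)/\<delta>\<rfloor> - \<lceil>(f q - Dt)/\<delta>\<rceil> + 2) \<le> 2 * Dt / \<delta> + 2"
        unfolding of_int_add of_int_diff by linarith
      then show ?thesis by (rule real_nat_le) (use \<open>0 \<le> 2 * Dt / \<delta>\<close> in linarith)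
    qed
    finally show ?thesis .
  qed
  have "real (card G) \<le> real (card (Sigma Cols col))"
  proof -
    have "G \<subseteq> Sigma Cols col" using Gsub unfolding col_def by auto
    moreover have "finite (Sigma Cols col)" using finCols fincol by auto
    ultimately show ?thesis by (simp add: card_mono)
  qed
  also have "\<dots> = (\<Sum>m\<in>Cols. real (card (col m)))"
  proof -
    have "card (Sigma Cols col) = (\<Sum>m\<in>Cols. card (col m))" by (rule card_SigmaI[OF finCols]) (use fincol in blast)
    then show ?thesis by simp
  qed
  also have "\<dots> \<le> (\<Sum>m\<in>Cols. 2 * Dt / \<delta> + 2)" by (rule sum_mono) (rule colb)
  also have "\<dots> = real (card Cols) * (2 * Dt / \<delta> + 2)" by simp
  also have "\<dots> \<le> (\<Prod>e\<in>Basis. (b \<bullet> e - a \<bullet> e) / \<delta> + 2) * (2 * Dt / \<delta> + 2)"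
  proof (rule mult_right_mono)
    show "0 \<le> 2 * Dt / \<delta> + 2" using Dt d by simp
    have "real (card Cols) = (\<Prod>e\<in>Basis. real (card {\<lceil>a \<bullet> e/\<delta>\<rceil> - 1..\<lfloor>b \<bullet> e/\<delta>\<rfloor>}))"
      unfolding Cols_def card_PiE[OF finite_Basis] by simp
    also have "\<dots> \<le> (\<Prod>e\<in>Basis. (b \<bullet> e - a \<bullet> e) / \<delta> + 2)"
    proof (rule prod_mono)
      fix e :: 'a assume e: "e \<in> Basis"
      have "real (card {\<lceil>a \<bullet> e/\<delta>\<rceil> - 1..\<lfloor>b \<bullet> e/\<delta>\<rfloor>}) = real (nat (\<lfloor>b \<bullet> e/\<delta>\<rfloor> - \<lceil>a \<bullet> e/\<delta>\<rceil> + 2))" by simp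
      also have "\<dots> \<le> (b \<bullet> e - a \<bullet> e) / \<delta> + 2"
      proof -
        have "real_of_int \<lfloor>b \<bullet> e/\<delta>\<rfloor> \<le> b \<bullet> e/\<delta>" by linarith
        moreover have "a \<bullet> e/\<delta> \<le> real_of_int \<lceil>a \<bullet> e/\<delta>\<rceil>" by linarith
        moreover have "b \<bullet> e/\<delta> - a \<bullet> e/\<delta> = (b \<bullet> e - a \<bullet> e) / \<delta>" by (simp add: diff_divide_distrib)
        moreover have "0 \<le> (b \<bullet> e - a \<bullet> e) / \<delta>" using ab[OF e] d by simp
        ultimately have "real_of_int (\<lfloor>b \<bullet> e/\<delta>\<rfloor> - \<lceil>a \<bullet> e/\<delta>\<rceil> + 2) \<le> (b \<bullet> e - a \<bullet> e) / \<delta> + 2"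
          unfolding of_int_add of_int_diff by linarith
        then show ?thesis by (rule real_nat_le) (use \<open>0 \<le> (b \<bullet> e - a \<bullet> e) / \<delta>\<close> in linarith)
      qed
      finally show "0 \<le> real (card {\<lceil>a \<bullet> e/\<delta>\<rceil> - 1..\<lfloor>b \<bullet> e/\<delta>\<rfloor>}) \<and> real (card {\<lceil>a \<bullet> e/\<delta>\<rceil> - 1..\<lfloor>b \<bullet> e/\<delta>\<rfloor>}) \<le> (b \<bullet> e - a \<bullet> e) / \<delta> + 2"
        by simp
    qed
    finally show "real (card Cols) \<le> (\<Prod>e\<in>Basis. (b \<bullet> e - a \<bullet> e) / \<delta> + 2)" .
  qed
  finally show ?thesis unfolding G_def Dt_def .
qed

lemma lim_aux: "((\<lambda>\<delta>::real. C / ln (1/\<delta>) + D) \<longlongrightarrow> D) (at_right 0)"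
proof -
  have "((\<lambda>\<delta>::real. C / ln (1/\<delta>)) \<longlongrightarrow> 0) (at_right 0)" by real_asymp
  from tendsto_add[OF this tendsto_const[of D]] show ?thesis by simp
qed

lemma ratio_upper:
  fixes N :: "real \<Rightarrow> nat"
  assumes K: "0 < K" and d1: "0 < \<delta>1"
    and B: "\<And>\<delta>. 0 < \<delta> \<Longrightarrow> \<delta> < \<delta>1 \<Longrightarrow> 1 \<le> N \<delta> \<and> real (N \<delta>) \<le> K * \<delta> powr (-D)"
  shows "\<forall>\<^sub>F \<delta> in at_right 0. ln (real (N \<delta>)) / ln (1/\<delta>) \<le> ln K / ln (1/\<delta>) + D"
proof -
  have "\<forall>\<^sub>F \<delta> in at_right (0::real). 0 < \<delta> \<and> \<delta> < min \<delta>1 1"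
    unfolding eventually_at_right_field using d1 by (intro exI[of _ "min \<delta>1 1"]) auto
  then show ?thesis
  proof (rule eventually_mono)
    fix \<delta> :: real assume \<delta>: "0 < \<delta> \<and> \<delta> < min \<delta>1 1"
    have L: "0 < ln (1/\<delta>)" using \<delta> by simp
    have N: "1 \<le> N \<delta>" "real (N \<delta>) \<le> K * \<delta> powr (-D)" using B \<delta> by auto
    have "ln (real (N \<delta>)) \<le> ln (K * \<delta> powr (-D))" using N K \<delta> by (subst ln_le_cancel_iff) auto
    also have "\<dots> = ln K + D * ln (1/\<delta>)" using K \<delta> by (simp add: ln_mult ln_powr ln_div)
    finally have "ln (real (N \<delta>)) \<le> ln K + D * ln (1/\<delta>)" .
    then have "ln (real (N \<delta>)) / ln (1/\<delta>) \<le> (ln K + D * ln (1/\<delta>)) / ln (1/\<delta>)"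
      using L by (simp add: divide_right_mono)
    also have "\<dots> = ln K / ln (1/\<delta>) + D" using L by (simp add: add_divide_distrib)
    finally show "ln (real (N \<delta>)) / ln (1/\<delta>) \<le> ln K / ln (1/\<delta>) + D" .
  qed
qed

lemma ratio_lower:
  fixes N :: "real \<Rightarrow> nat"
  assumes k: "0 < k" and d1: "0 < \<delta>1"
    and B: "\<And>\<delta>. 0 < \<delta> \<Longrightarrow> \<delta> < \<delta>1 \<Longrightarrow> k * \<delta> powr (-D) \<le> real (N \<delta>)"
  shows "\<forall>\<^sub>F \<delta> in at_right 0. ln k / ln (1/\<delta>) + D \<le> ln (real (N \<delta>)) / ln (1/\<delta>)"
proof -
  have "\<forall>\<^sub>F \<delta> in at_right (0::real). 0 < \<delta> \<and> \<delta> < min \<delta>1 1"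
    unfolding eventually_at_right_field using d1 by (intro exI[of _ "min \<delta>1 1"]) auto
  then show ?thesis
  proof (rule eventually_mono)
    fix \<delta> :: real assume \<delta>: "0 < \<delta> \<and> \<delta> < min \<delta>1 1"
    have L: "0 < ln (1/\<delta>)" using \<delta> by simp
    have N: "k * \<delta> powr (-D) \<le> real (N \<delta>)" using B \<delta> by auto
    have pos: "0 < k * \<delta> powr (-D)" using k \<delta> by simp
    have "ln k + D * ln (1/\<delta>) = ln (k * \<delta> powr (-D))" using k \<delta> by (simp add: ln_mult ln_powr ln_div)
    also have "\<dots> \<le> ln (real (N \<delta>))" using N pos by (subst ln_le_cancel_iff) auto
    finally have "ln k + D * ln (1/\<delta>) \<le> ln (real (N \<delta>))" .
    then have "(ln k + D * ln (1/\<delta>)) / ln (1/\<delta>) \<le> ln (real (N \<delta>)) / ln (1/\<delta>)"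
      using L by (simp add: divide_right_mono)
    moreover have "(ln k + D * ln (1/\<delta>)) / ln (1/\<delta>) = ln k / ln (1/\<delta>) + D" using L by (simp add: add_divide_distrib)
    ultimately show "ln k / ln (1/\<delta>) + D \<le> ln (real (N \<delta>)) / ln (1/\<delta>)" by simp
  qed
qed

lemma dim_upper:
  fixes N :: "real \<Rightarrow> nat"
  assumes K: "0 < K" and d1: "0 < \<delta>1"
    and B: "\<And>\<delta>. 0 < \<delta> \<Longrightarrow> \<delta> < \<delta>1 \<Longrightarrow> 1 \<le> N \<delta> \<and> real (N \<delta>) \<le> K * \<delta> powr (-D)"
  shows "Limsup (at_right 0) (\<lambda>\<delta>. ereal (ln (real (N \<delta>)) / ln (1/\<delta>))) \<le> ereal D"
    and "((\<lambda>\<delta>. ln (real (N \<delta>)) / ln (1/\<delta>)) \<longlongrightarrow> d) (at_right 0) \<Longrightarrow> d \<le> D"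
proof -
  have ev: "\<forall>\<^sub>F \<delta> in at_right 0. ln (real (N \<delta>)) / ln (1/\<delta>) \<le> ln K / ln (1/\<delta>) + D"
    by (rule ratio_upper[OF K d1 B])
  have "Limsup (at_right 0) (\<lambda>\<delta>. ereal (ln (real (N \<delta>)) / ln (1/\<delta>)))
      \<le> Limsup (at_right 0) (\<lambda>\<delta>. ereal (ln K / ln (1/\<delta>) + D))"
    by (rule Limsup_mono) (use ev in \<open>auto elim: eventually_mono\<close>)
  also have "\<dots> = ereal D"
    by (rule lim_imp_Limsup) (use lim_aux[of "ln K" D] in \<open>auto simp: tendsto_ereal\<close>)
  finally show "Limsup (at_right 0) (\<lambda>\<delta>. ereal (ln (real (N \<delta>)) / ln (1/\<delta>))) \<le> ereal D" .
  assume lim: "((\<lambda>\<delta>. ln (real (N \<delta>)) / ln (1/\<delta>)) \<longlongrightarrow> d) (at_right 0)"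
  show "d \<le> D" by (rule tendsto_le[OF _ lim_aux[of "ln K" D] lim ev]) simp
qed

lemma dim_lower:
  fixes N :: "real \<Rightarrow> nat"
  assumes k: "0 < k" and d1: "0 < \<delta>1"
    and B: "\<And>\<delta>. 0 < \<delta> \<Longrightarrow> \<delta> < \<delta>1 \<Longrightarrow> k * \<delta> powr (-D) \<le> real (N \<delta>)"
  shows "ereal D \<le> Liminf (at_right 0) (\<lambda>\<delta>. ereal (ln (real (N \<delta>)) / ln (1/\<delta>)))"
proof -
  have ev: "\<forall>\<^sub>F \<delta> in at_right 0. ln k / ln (1/\<delta>) + D \<le> ln (real (N \<delta>)) / ln (1/\<delta>)"
    by (rule ratio_lower[OF k d1 B])
  have "ereal D = Liminf (at_right 0) (\<lambda>\<delta>. ereal (ln k / ln (1/\<delta>) + D))"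
    by (rule lim_imp_Liminf[symmetric]) (use lim_aux[of "ln k" D] in \<open>auto simp: tendsto_ereal\<close>)
  also have "\<dots> \<le> Liminf (at_right 0) (\<lambda>\<delta>. ereal (ln (real (N \<delta>)) / ln (1/\<delta>)))"
    by (rule Liminf_mono) (use ev in \<open>auto elim: eventually_mono\<close>)
  finally show ?thesis .
qed

lemma dim_both:
  fixes N :: "real \<Rightarrow> nat"
  assumes K: "0 < K" and d1: "0 < \<delta>1"
    and B: "\<And>\<delta>. 0 < \<delta> \<Longrightarrow> \<delta> < \<delta>1 \<Longrightarrow> 1 \<le> N \<delta> \<and> real (N \<delta>) \<le> K * \<delta> powr (-D)"
    and k: "0 < k" and d2: "0 < \<delta>2"
    and B2: "\<And>\<delta>. 0 < \<delta> \<Longrightarrow> \<delta> < \<delta>2 \<Longrightarrow> k * \<delta> powr (-D) \<le> real (N \<delta>)"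
  shows "((\<lambda>\<delta>. ln (real (N \<delta>)) / ln (1/\<delta>)) \<longlongrightarrow> D) (at_right 0)"
  by (rule tendsto_sandwich[OF ratio_lower[OF k d2 B2] ratio_upper[OF K d1 B] lim_aux lim_aux])

lemma floor_cell: "0 < (\<delta>::real) \<Longrightarrow> of_int \<lfloor>y/\<delta>\<rfloor> * \<delta> \<le> y \<and> y \<le> (of_int \<lfloor>y/\<delta>\<rfloor> + 1) * \<delta>"
proof -
  assume d: "0 < \<delta>"
  have "of_int \<lfloor>y/\<delta>\<rfloor> \<le> y/\<delta>" "y/\<delta> \<le> of_int \<lfloor>y/\<delta>\<rfloor> + 1" by linarith+
  then show ?thesis using d by (metis pos_le_divide_eq pos_divide_le_eq)
qed

lemma gset_one:
  fixes f :: "'a::euclidean_space \<Rightarrow> real"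
  assumes ab: "\<And>e. e \<in> Basis \<Longrightarrow> a \<bullet> e \<le> b \<bullet> e" and cont: "continuous_on (cbox a b) f" and d: "0 < \<delta>"
  shows "1 \<le> card (gset \<delta> (cbox a b) f)"
proof -
  obtain M where M: "\<And>x. x \<in> cbox a b \<Longrightarrow> \<bar>f x\<bar> \<le> M"
    using cont_bounded[OF cont compact_cbox] by blast
  have fin: "finite (gset \<delta> (cbox a b) f)" by (rule gset_finite[of \<delta> a b f M, OF d M])
  have a: "a \<in> cbox a b" using ab unfolding mem_box by auto
  have "(restrict (\<lambda>e. \<lfloor>a \<bullet> e/\<delta>\<rfloor>) Basis, \<lfloor>f a/\<delta>\<rfloor>) \<in> gset \<delta> (cbox a b) f"
    unfolding gset_def cell_def using a floor_cell[OF d] by auto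
  then have "gset \<delta> (cbox a b) f \<noteq> {}" by blast
  then show ?thesis using fin by (simp add: Suc_le_eq card_gt_0_iff)
qed

lemma upper_asym:
  fixes f :: "'a::euclidean_space \<Rightarrow> real"
  assumes ab: "\<And>e. e \<in> Basis \<Longrightarrow> a \<bullet> e < b \<bullet> e"
    and cont: "continuous_on (cbox a b) f" and h: "0 < h" "h \<le> 1" and d0: "0 < \<delta>0"
    and c: "\<And>e. e \<in> Basis \<Longrightarrow> 0 \<le> c e" and Hh: "\<And>e. e \<in> Basis \<Longrightarrow> h \<le> H e"
    and O: "\<And>\<delta> e x t. 0 < \<delta> \<Longrightarrow> \<delta> < \<delta>0 \<Longrightarrow> e \<in> Basis \<Longrightarrow> x \<in> cbox a b \<Longrightarrow> t \<in> {a \<bullet> e..b \<bullet> e} \<Longrightarrow>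
        osc (a \<bullet> e) (b \<bullet> e) \<delta> t (sec f x e) \<le> c e * \<delta> powr H e"
  shows "\<exists>K>0. \<forall>\<delta>. 0 < \<delta> \<and> \<delta> < min \<delta>0 1 \<longrightarrow>
           real (card (gset \<delta> (cbox a b) f)) \<le> K * \<delta> powr (h - 1 - real DIM('a))"
proof -
  define L where "L = (\<Prod>e\<in>Basis. b \<bullet> e - a \<bullet> e + 2)"
  define S where "S = (\<Sum>e\<in>Basis. c e)"
  have L: "0 < L" unfolding L_def by (rule prod_pos) (use ab in \<open>auto simp: less_imp_le add_pos_nonneg\<close>)
  have S: "0 \<le> S" unfolding S_def by (rule sum_nonneg) (use c in auto)
  have "\<forall>\<delta>. 0 < \<delta> \<and> \<delta> < min \<delta>0 1 \<longrightarrow>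
           real (card (gset \<delta> (cbox a b) f)) \<le> (L * (2 * S + 2)) * \<delta> powr (h - 1 - real DIM('a))"
  proof (intro allI impI)
    fix \<delta> :: real assume \<delta>: "0 < \<delta> \<and> \<delta> < min \<delta>0 1"
    then have d: "0 < \<delta>" "\<delta> < \<delta>0" "\<delta> < 1" by auto
    have N: "real (card (gset \<delta> (cbox a b) f)) \<le> (\<Prod>e\<in>Basis. (b \<bullet> e - a \<bullet> e) / \<delta> + 2) * (2 * (\<Sum>e\<in>Basis. c e * \<delta> powr H e) / \<delta> + 2)"
      by (rule upper_fixed[OF ab cont d(1)]) (use O d c in auto)
    have P1: "(\<Prod>e\<in>Basis. (b \<bullet> e - a \<bullet> e) / \<delta> + 2) \<le> L / \<delta> ^ DIM('a)"
    proof -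
      have "(\<Prod>e\<in>Basis. (b \<bullet> e - a \<bullet> e) / \<delta> + 2) \<le> (\<Prod>e\<in>Basis. (b \<bullet> e - a \<bullet> e + 2) / \<delta>)"
      proof (rule prod_mono)
        fix e :: 'a assume e: "e \<in> Basis"
        have "2 \<le> 2 / \<delta>" using d by (simp add: le_divide_eq)
        moreover have "0 \<le> (b \<bullet> e - a \<bullet> e) / \<delta>" using ab[OF e] d by simp
        ultimately show "0 \<le> (b \<bullet> e - a \<bullet> e) / \<delta> + 2 \<and> (b \<bullet> e - a \<bullet> e) / \<delta> + 2 \<le> (b \<bullet> e - a \<bullet> e + 2) / \<delta>"
          by (simp add: add_divide_distrib)
      qed
      also have "\<dots> = L / \<delta> ^ DIM('a)" unfolding L_def prod_dividef prod_constant by simp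
      finally show ?thesis .
    qed
    have P2: "2 * (\<Sum>e\<in>Basis. c e * \<delta> powr H e) / \<delta> + 2 \<le> (2 * S + 2) * \<delta> powr (h - 1)"
    proof -
      have "(\<Sum>e\<in>Basis. c e * \<delta> powr H e) \<le> (\<Sum>e\<in>Basis. c e * \<delta> powr h)"
        by (rule sum_mono) (use c Hh d in \<open>auto intro!: mult_left_mono powr_mono'\<close>)
      also have "\<dots> = S * \<delta> powr h" unfolding S_def by (simp add: sum_distrib_right)
      finally have s1: "(\<Sum>e\<in>Basis. c e * \<delta> powr H e) \<le> S * \<delta> powr h" .
      have e1: "\<delta> powr h / \<delta> = \<delta> powr (h - 1)" using d by (simp add: powr_diff)
      have one: "1 \<le> \<delta> powr (h - 1)"
        using powr_mono'[of "h - 1" 0 \<delta>] h d by simp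
      have "2 * (\<Sum>e\<in>Basis. c e * \<delta> powr H e) / \<delta> \<le> 2 * (S * \<delta> powr h) / \<delta>"
        using s1 d by (simp add: divide_right_mono)
      also have "\<dots> = 2 * S * (\<delta> powr h / \<delta>)" by simp
      also have "\<dots> = 2 * S * \<delta> powr (h - 1)" unfolding e1 ..
      finally show ?thesis using one by (simp add: algebra_simps)
    qed
    have nn1: "0 \<le> (\<Prod>e\<in>Basis. (b \<bullet> e - a \<bullet> e) / \<delta> + 2)"
      by (rule prod_nonneg) (use ab d in \<open>auto simp: less_imp_le\<close>)
    have nn2: "0 \<le> 2 * (\<Sum>e\<in>Basis. c e * \<delta> powr H e) / \<delta> + 2"
    proof -
      have "0 \<le> (\<Sum>e\<in>Basis. c e * \<delta> powr H e)" by (rule sum_nonneg) (use c in auto)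
      then show ?thesis using d by simp
    qed
    have "real (card (gset \<delta> (cbox a b) f)) \<le> (L / \<delta> ^ DIM('a)) * ((2 * S + 2) * \<delta> powr (h - 1))"
      using N mult_mono[OF P1 P2 _ nn2] L d by (smt (verit) divide_nonneg_pos zero_less_power)
    also have "\<dots> = (L * (2 * S + 2)) * (\<delta> powr (h - 1) / \<delta> powr real DIM('a))"
      using d by (simp add: powr_realpow)
    also have "\<dots> = (L * (2 * S + 2)) * \<delta> powr (h - 1 - real DIM('a))"
      by (simp add: powr_diff)
    finally show "real (card (gset \<delta> (cbox a b) f)) \<le> (L * (2 * S + 2)) * \<delta> powr (h - 1 - real DIM('a))" .
  qed
  moreover have "0 < L * (2 * S + 2)" using L S by simp
  ultimately show ?thesis by blast
qed

lemma lower_asym: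
  fixes f :: "'a::euclidean_space \<Rightarrow> real"
  assumes ab: "\<And>e. e \<in> Basis \<Longrightarrow> a \<bullet> e < b \<bullet> e"
    and cont: "continuous_on (cbox a b) f" and e0: "e0 \<in> Basis" and c: "0 < c" and d0: "0 < \<delta>0"
    and A1: "A \<subseteq> {x \<in> cbox a b. x \<bullet> e0 = a \<bullet> e0}" and A2: "{x \<in> cbox a b. x \<bullet> e0 = a \<bullet> e0} \<subseteq> closure A"
    and V: "\<And>\<delta> x. 0 < \<delta> \<Longrightarrow> \<delta> < \<delta>0 \<Longrightarrow> x \<in> A \<Longrightarrow> c * \<delta> powr h \<le> Var (a \<bullet> e0) (b \<bullet> e0) \<delta> (sec f x e0)"
  shows "\<exists>k>0. \<forall>\<delta>. 0 < \<delta> \<and> \<delta> < \<delta>0 \<longrightarrow>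
           k * \<delta> powr (h - 1 - real DIM('a)) \<le> real (card (gset \<delta> (cbox a b) f))"
proof -
  define L where "L = (\<Prod>e\<in>Basis-{e0}. b \<bullet> e - a \<bullet> e)"
  have L: "0 < L" unfolding L_def by (rule prod_pos) (use ab in auto)
  have cardB: "card (Basis - {e0} :: 'a set) = DIM('a) - 1" using e0 by simp
  have DIM1: "1 \<le> DIM('a)" using e0 by (simp add: DIM_positive Suc_le_eq)
  have "\<forall>\<delta>. 0 < \<delta> \<and> \<delta> < \<delta>0 \<longrightarrow>
           (L * c / 3) * \<delta> powr (h - 1 - real DIM('a)) \<le> real (card (gset \<delta> (cbox a b) f))"
  proof (intro allI impI)
    fix \<delta> :: real assume \<delta>: "0 < \<delta> \<and> \<delta> < \<delta>0"
    then have d: "0 < \<delta>" "\<delta> < \<delta>0" by auto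
    have N: "(\<Prod>e\<in>Basis-{e0}. (b \<bullet> e - a \<bullet> e) / \<delta>) * (c * \<delta> powr h / (3 * \<delta>^2)) \<le> real (card (gset \<delta> (cbox a b) f))"
      by (rule lower_fixed[OF ab cont e0 d(1) A1 A2]) (use c d V in auto)
    have "(\<Prod>e\<in>Basis-{e0}. (b \<bullet> e - a \<bullet> e) / \<delta>) = L / \<delta> ^ (DIM('a) - 1)"
      unfolding L_def prod_dividef prod_constant cardB ..
    then have "(\<Prod>e\<in>Basis-{e0}. (b \<bullet> e - a \<bullet> e) / \<delta>) * (c * \<delta> powr h / (3 * \<delta>^2))
        = (L * c / 3) * (\<delta> powr h / (\<delta> ^ (DIM('a) - 1) * \<delta>^2))" by (simp add: field_simps)
    also have "\<delta> ^ (DIM('a) - 1) * \<delta>^2 = \<delta> ^ (DIM('a) + 1)"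
      using DIM1 by (simp add: power_add[symmetric])
    also have "\<delta> powr h / \<delta> ^ (DIM('a) + 1) = \<delta> powr (h - 1 - real DIM('a))"
    proof -
      have "\<delta> ^ (DIM('a) + 1) = \<delta> powr real (DIM('a) + 1)" using powr_realpow[OF d(1), of "DIM('a) + 1"] by simp
      then show ?thesis by (simp add: powr_diff[symmetric] algebra_simps)
    qed
    finally have eq: "(\<Prod>e\<in>Basis-{e0}. (b \<bullet> e - a \<bullet> e) / \<delta>) * (c * \<delta> powr h / (3 * \<delta>^2))
        = (L * c / 3) * \<delta> powr (h - 1 - real DIM('a))" .
    show "(L * c / 3) * \<delta> powr (h - 1 - real DIM('a)) \<le> real (card (gset \<delta> (cbox a b) f))"
      using N unfolding eq .
  qed
  moreover have "0 < L * c / 3" using L c by simp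
  ultimately show ?thesis by blast
qed

lemma axis_Basis: "axis i (1::real) \<in> (Basis :: (real^'n) set)" by (auto simp: Basis_vec_def)

lemma inner_axis1: "(a::real^'n) \<bullet> axis i 1 = a $ i" by (simp add: inner_axis)

lemma fsec_sec: "fsec f x i = sec f x (axis i 1)"
proof
  fix t
  have "setcoord x i t = x + (t - x \<bullet> axis i 1) *\<^sub>R axis i 1"
    unfolding setcoord_def inner_axis1 by (simp add: vec_eq_iff axis_def)
  then show "fsec f x i t = sec f x (axis i 1) t" unfolding fsec_def sec_def by simp
qed

lemma sec_real: "sec g (y::real) 1 = g"
  unfolding sec_def by (simp add: fun_eq_iff)

lemma grid_graphn: "grid_count \<delta> (graphn Q f) = card (gset \<delta> Q f)"
  unfolding graphn_def by (rule grid_count_graph)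

lemma grid_graph1: "grid_count \<delta> (graph1 \<alpha> \<beta> g) = card (gset \<delta> (cbox \<alpha> \<beta>) g)"
  unfolding graph1_def cbox_interval by (rule grid_count_graph)

lemma ab_Basis:
  fixes a b :: "real^'n"
  assumes ab: "\<And>i. a$i < b$i"
  shows "\<And>e. e \<in> Basis \<Longrightarrow> a \<bullet> e < b \<bullet> e"
proof -
  fix e :: "real^'n" assume "e \<in> Basis"
  then obtain i where "e = axis i 1" using axis_inverse by blast
  then show "a \<bullet> e < b \<bullet> e" using ab[of i] by (simp add: inner_axis1)
qed

lemma upper_n:
  fixes a b :: "real^'n" and f :: "real^'n \<Rightarrow> real" and H :: "'n \<Rightarrow> real"
  assumes ab: "\<And>i. a$i < b$i" and cont: "continuous_on (cbox a b) f"
    and h: "0 < h" "h \<le> 1" and Hh: "\<And>i. h \<le> H i"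
    and hyp: "osc_hyp a b f H"
  shows "\<exists>K>0. \<exists>\<delta>1>0. \<forall>\<delta>. 0 < \<delta> \<and> \<delta> < \<delta>1 \<longrightarrow> 1 \<le> card (gset \<delta> (cbox a b) f) \<and>
      real (card (gset \<delta> (cbox a b) f)) \<le> K * \<delta> powr (- (real CARD('n) + 1 - h))"
proof -
  obtain c where c: "\<And>i. c i > 0" and ex: "\<exists>\<delta>0>0. \<forall>\<delta>. 0 < \<delta> \<and> \<delta> < \<delta>0 \<longrightarrow>
      (\<forall>i. \<forall>x\<in>cbox a b. \<forall>t\<in>{a$i..b$i}. osc (a$i) (b$i) \<delta> t (fsec f x i) \<le> c i * \<delta> powr H i)"
    using hyp unfolding osc_hyp_def by blast
  obtain \<delta>0 where d0: "\<delta>0 > 0" and O': "\<forall>\<delta>. 0 < \<delta> \<and> \<delta> < \<delta>0 \<longrightarrow>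
      (\<forall>i. \<forall>x\<in>cbox a b. \<forall>t\<in>{a$i..b$i}. osc (a$i) (b$i) \<delta> t (fsec f x i) \<le> c i * \<delta> powr H i)"
    using ex by blast
  have O: "osc (a$i) (b$i) \<delta> t (fsec f x i) \<le> c i * \<delta> powr H i"
    if "0 < \<delta>" "\<delta> < \<delta>0" "x \<in> cbox a b" "t \<in> {a$i..b$i}" for \<delta> i x t
    using O' that by blast
  have ab': "\<And>e. e \<in> Basis \<Longrightarrow> a \<bullet> e < b \<bullet> e" by (rule ab_Basis[OF ab])
  have cnn: "\<And>e. e \<in> (Basis::(real^'n) set) \<Longrightarrow> 0 \<le> c (axis_index e)" using c by (simp add: less_imp_le)
  have Hh': "\<And>e. e \<in> (Basis::(real^'n) set) \<Longrightarrow> h \<le> H (axis_index e)" using Hh by simp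
  have O2: "osc (a \<bullet> e) (b \<bullet> e) \<delta> t (sec f x e) \<le> c (axis_index e) * \<delta> powr H (axis_index e)"
    if 3: "0 < \<delta>" "\<delta> < \<delta>0" "e \<in> Basis" "x \<in> cbox a b" "t \<in> {a \<bullet> e..b \<bullet> e}" for \<delta> e x t
  proof -
    define i where "i = axis_index e"
    then have e: "e = axis i 1" using 3 by (simp add: axis_index)
    have t: "t \<in> {a$i..b$i}" using 3(5) unfolding e inner_axis1 .
    show ?thesis using O[OF 3(1,2,4) t] unfolding e inner_axis1 fsec_sec by simp
  qed
  have "\<exists>K>0. \<forall>\<delta>. 0 < \<delta> \<and> \<delta> < min \<delta>0 1 \<longrightarrow>
           real (card (gset \<delta> (cbox a b) f)) \<le> K * \<delta> powr (h - 1 - real DIM(real^'n))"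
    by (rule upper_asym[OF ab' cont h d0 cnn Hh' O2])
  then obtain K where K: "K > 0" and KB: "\<forall>\<delta>. 0 < \<delta> \<and> \<delta> < min \<delta>0 1 \<longrightarrow>
           real (card (gset \<delta> (cbox a b) f)) \<le> K * \<delta> powr (h - 1 - real DIM(real^'n))"
    by blast
  have "\<forall>\<delta>. 0 < \<delta> \<and> \<delta> < min \<delta>0 1 \<longrightarrow> 1 \<le> card (gset \<delta> (cbox a b) f) \<and>
      real (card (gset \<delta> (cbox a b) f)) \<le> K * \<delta> powr (- (real CARD('n) + 1 - h))"
  proof (intro allI impI conjI)
    fix \<delta> :: real assume d: "0 < \<delta> \<and> \<delta> < min \<delta>0 1"
    show "1 \<le> card (gset \<delta> (cbox a b) f)"
      by (rule gset_one[OF _ cont]) (use ab' d in \<open>auto simp: less_imp_le\<close>)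
    have eqD: "h - 1 - real DIM(real^'n) = - (real CARD('n) + 1 - h)" by simp
    show "real (card (gset \<delta> (cbox a b) f)) \<le> K * \<delta> powr (- (real CARD('n) + 1 - h))"
      using KB d unfolding eqD by blast
  qed
  moreover have "0 < min \<delta>0 1" using d0 by simp
  ultimately show ?thesis using K by blast
qed

lemma lower_n:
  fixes a b :: "real^'n" and f :: "real^'n \<Rightarrow> real" and H :: "'n \<Rightarrow> real"
  assumes ab: "\<And>i. a$i < b$i" and cont: "continuous_on (cbox a b) f"
    and hyp: "var_hyp a b f H"
  shows "\<exists>k>0. \<exists>\<delta>1>0. \<forall>\<delta>. 0 < \<delta> \<and> \<delta> < \<delta>1 \<longrightarrow>
      k * \<delta> powr (- (real CARD('n) + 1 - H i0)) \<le> real (card (gset \<delta> (cbox a b) f))"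
proof -
  obtain A c where hA: "\<forall>i. c i > 0 \<and>
      A i \<subseteq> {x \<in> cbox a b. x$i = a$i} \<and> {x \<in> cbox a b. x$i = a$i} \<subseteq> closure (A i) \<and>
      (\<exists>\<delta>0>0. \<forall>\<delta>. 0 < \<delta> \<and> \<delta> < \<delta>0 \<longrightarrow>
         (\<forall>x\<in>A i. Var (a$i) (b$i) \<delta> (fsec f x i) \<ge> c i * \<delta> powr H i))"
    using hyp unfolding var_hyp_def by (elim exE) (rule that)
  have hA0: "c i0 > 0" "A i0 \<subseteq> {x \<in> cbox a b. x$i0 = a$i0}" "{x \<in> cbox a b. x$i0 = a$i0} \<subseteq> closure (A i0)"
    "\<exists>\<delta>0>0. \<forall>\<delta>. 0 < \<delta> \<and> \<delta> < \<delta>0 \<longrightarrow>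
         (\<forall>x\<in>A i0. Var (a$i0) (b$i0) \<delta> (fsec f x i0) \<ge> c i0 * \<delta> powr H i0)"
    using spec[OF hA, of i0] by auto
  obtain \<delta>0 where d0: "\<delta>0 > 0" and V: "\<forall>\<delta>. 0 < \<delta> \<and> \<delta> < \<delta>0 \<longrightarrow>
         (\<forall>x\<in>A i0. Var (a$i0) (b$i0) \<delta> (fsec f x i0) \<ge> c i0 * \<delta> powr H i0)"
    using hA0(4) by (elim exE conjE) (rule that)
  have ab': "\<And>e. e \<in> Basis \<Longrightarrow> a \<bullet> e < b \<bullet> e" by (rule ab_Basis[OF ab])
  define e0 where "e0 = (axis i0 1 :: real^'n)"
  have e0: "e0 \<in> Basis" unfolding e0_def by (rule axis_Basis)
  have face: "{x \<in> cbox a b. x \<bullet> e0 = a \<bullet> e0} = {x \<in> cbox a b. x$i0 = a$i0}"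
    unfolding e0_def inner_axis1 ..
  have A1': "A i0 \<subseteq> {x \<in> cbox a b. x \<bullet> e0 = a \<bullet> e0}" unfolding face by (rule hA0(2))
  have A2': "{x \<in> cbox a b. x \<bullet> e0 = a \<bullet> e0} \<subseteq> closure (A i0)" unfolding face by (rule hA0(3))
  have V': "c i0 * \<delta> powr H i0 \<le> Var (a \<bullet> e0) (b \<bullet> e0) \<delta> (sec f x e0)"
    if "0 < \<delta>" "\<delta> < \<delta>0" "x \<in> A i0" for \<delta> x
    using V that unfolding e0_def inner_axis1 fsec_sec by blast
  have "\<exists>k>0. \<forall>\<delta>. 0 < \<delta> \<and> \<delta> < \<delta>0 \<longrightarrow>
           k * \<delta> powr (H i0 - 1 - real DIM(real^'n)) \<le> real (card (gset \<delta> (cbox a b) f))"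
    by (rule lower_asym[OF ab' cont e0 hA0(1) d0 A1' A2' V'])
  then obtain k where k: "k > 0" and kB: "\<forall>\<delta>. 0 < \<delta> \<and> \<delta> < \<delta>0 \<longrightarrow>
           k * \<delta> powr (H i0 - 1 - real DIM(real^'n)) \<le> real (card (gset \<delta> (cbox a b) f))"
    by blast
  have eqD: "H i0 - 1 - real DIM(real^'n) = - (real CARD('n) + 1 - H i0)" by simp
  show ?thesis using k kB d0 unfolding eqD by blast
qed

lemma one_dim_upper:
  fixes g :: "real \<Rightarrow> real"
  assumes \<alpha>\<beta>: "\<alpha> < \<beta>" and cont: "continuous_on {\<alpha>..\<beta>} g" and h: "0 < h" "h \<le> 1"
    and d0: "0 < \<delta>0" and c: "0 \<le> c"
    and O: "\<And>\<delta> t. 0 < \<delta> \<Longrightarrow> \<delta> < \<delta>0 \<Longrightarrow> t \<in> {\<alpha>..\<beta>} \<Longrightarrow> osc \<alpha> \<beta> \<delta> t g \<le> c * \<delta> powr h"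
  shows "\<exists>K>0. \<exists>\<delta>1>0. \<forall>\<delta>. 0 < \<delta> \<and> \<delta> < \<delta>1 \<longrightarrow> 1 \<le> card (gset \<delta> (cbox \<alpha> \<beta>) g) \<and>
      real (card (gset \<delta> (cbox \<alpha> \<beta>) g)) \<le> K * \<delta> powr (- (2 - h))"
proof -
  have ab': "\<And>e. e \<in> (Basis::real set) \<Longrightarrow> \<alpha> \<bullet> e < \<beta> \<bullet> e" using \<alpha>\<beta> by simp
  have cont': "continuous_on (cbox \<alpha> \<beta>) g" using cont by (simp add: cbox_interval)
  have cnn: "\<And>e. e \<in> (Basis::real set) \<Longrightarrow> 0 \<le> c" using c .
  have Hh: "\<And>e. e \<in> (Basis::real set) \<Longrightarrow> h \<le> h" by simp
  have O2: "osc (\<alpha> \<bullet> e) (\<beta> \<bullet> e) \<delta> t (sec g x e) \<le> c * \<delta> powr h"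
    if "0 < \<delta>" "\<delta> < \<delta>0" "e \<in> Basis" "x \<in> cbox \<alpha> \<beta>" "t \<in> {\<alpha> \<bullet> e..\<beta> \<bullet> e}" for \<delta> e x t
  proof -
    have e: "e = 1" using that(3) by simp
    show ?thesis using O[OF that(1,2)] that(5) unfolding e sec_real by simp
  qed
  have "\<exists>K>0. \<forall>\<delta>. 0 < \<delta> \<and> \<delta> < min \<delta>0 1 \<longrightarrow>
           real (card (gset \<delta> (cbox \<alpha> \<beta>) g)) \<le> K * \<delta> powr (h - 1 - real DIM(real))"
    by (rule upper_asym[OF ab' cont' h d0, of "\<lambda>_. c" "\<lambda>_. h"]) (use cnn O2 in auto)
  then obtain K where K: "K > 0" and KB: "\<forall>\<delta>. 0 < \<delta> \<and> \<delta> < min \<delta>0 1 \<longrightarrow>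
           real (card (gset \<delta> (cbox \<alpha> \<beta>) g)) \<le> K * \<delta> powr (h - 1 - real DIM(real))" by blast
  have eqD: "h - 1 - real DIM(real) = - (2 - h)" by simp
  have "\<forall>\<delta>. 0 < \<delta> \<and> \<delta> < min \<delta>0 1 \<longrightarrow> 1 \<le> card (gset \<delta> (cbox \<alpha> \<beta>) g) \<and>
      real (card (gset \<delta> (cbox \<alpha> \<beta>) g)) \<le> K * \<delta> powr (- (2 - h))"
  proof (intro allI impI conjI)
    fix \<delta> :: real assume d: "0 < \<delta> \<and> \<delta> < min \<delta>0 1"
    show "1 \<le> card (gset \<delta> (cbox \<alpha> \<beta>) g)"
      by (rule gset_one[OF _ cont']) (use ab' d in \<open>auto simp: less_imp_le\<close>)
    show "real (card (gset \<delta> (cbox \<alpha> \<beta>) g)) \<le> K * \<delta> powr (- (2 - h))"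
      using KB d unfolding eqD by blast
  qed
  moreover have "0 < min \<delta>0 1" using d0 by simp
  ultimately show ?thesis using K by blast
qed

lemma one_dim_lower:
  fixes g :: "real \<Rightarrow> real"
  assumes \<alpha>\<beta>: "\<alpha> < \<beta>" and cont: "continuous_on {\<alpha>..\<beta>} g"
    and d0: "0 < \<delta>0" and c: "0 < c"
    and V: "\<And>\<delta>. 0 < \<delta> \<Longrightarrow> \<delta> < \<delta>0 \<Longrightarrow> c * \<delta> powr h \<le> Var \<alpha> \<beta> \<delta> g"
  shows "\<exists>k>0. \<exists>\<delta>1>0. \<forall>\<delta>. 0 < \<delta> \<and> \<delta> < \<delta>1 \<longrightarrow>
      k * \<delta> powr (- (2 - h)) \<le> real (card (gset \<delta> (cbox \<alpha> \<beta>) g))"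
proof -
  have ab': "\<And>e. e \<in> (Basis::real set) \<Longrightarrow> \<alpha> \<bullet> e < \<beta> \<bullet> e" using \<alpha>\<beta> by simp
  have cont': "continuous_on (cbox \<alpha> \<beta>) g" using cont by (simp add: cbox_interval)
  have e0: "(1::real) \<in> Basis" by simp
  have A1: "{\<alpha>} \<subseteq> {x \<in> cbox \<alpha> \<beta>. x \<bullet> 1 = \<alpha> \<bullet> 1}" using \<alpha>\<beta> by (simp add: cbox_interval)
  have A2: "{x \<in> cbox \<alpha> \<beta>. x \<bullet> 1 = \<alpha> \<bullet> (1::real)} \<subseteq> closure {\<alpha>}" by auto
  have V': "c * \<delta> powr h \<le> Var (\<alpha> \<bullet> 1) (\<beta> \<bullet> 1) \<delta> (sec g x 1)"
    if "0 < \<delta>" "\<delta> < \<delta>0" "x \<in> {\<alpha>}" for \<delta> x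
    using V[OF that(1,2)] unfolding sec_real by simp
  have "\<exists>k>0. \<forall>\<delta>. 0 < \<delta> \<and> \<delta> < \<delta>0 \<longrightarrow>
           k * \<delta> powr (h - 1 - real DIM(real)) \<le> real (card (gset \<delta> (cbox \<alpha> \<beta>) g))"
    by (rule lower_asym[OF ab' cont' e0 c d0 A1 A2 V'])
  then obtain k where k: "k > 0" and kB: "\<forall>\<delta>. 0 < \<delta> \<and> \<delta> < \<delta>0 \<longrightarrow>
           k * \<delta> powr (h - 1 - real DIM(real)) \<le> real (card (gset \<delta> (cbox \<alpha> \<beta>) g))" by blast
  have eqD: "h - 1 - real DIM(real) = - (2 - h)" by simp
  show ?thesis using k kB d0 unfolding eqD by blast
qed

theorem mainTheorem7:
  fixes a b :: "real^'n" and f :: "real^'n \<Rightarrow> real" and H :: "'n \<Rightarrow> real"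
  assumes ab: "\<And>i. a$i < b$i"
    and cont: "continuous_on (cbox a b) f"
    and H: "\<And>i. 0 < H i \<and> H i \<le> 1"
  defines "s \<equiv> (\<lambda>i. Sup {d. \<exists>x\<in>cbox a b. has_box_dim (graph1 (a$i) (b$i) (fsec f x i)) d})"
  shows "(osc_hyp a b f H \<longrightarrow>
            upper_box_dim (graphn (cbox a b) f) \<le> ereal (real CARD('n) + 1 - Min (range H)))
       \<and> (var_hyp a b f H \<longrightarrow>
            lower_box_dim (graphn (cbox a b) f) \<ge> ereal (real CARD('n) + 1 - Min (range H)))
       \<and> (osc_hyp a b f H \<and> var_hyp a b f H \<longrightarrow>
            has_box_dim (graphn (cbox a b) f) (real CARD('n) + 1 - Min (range H)) \<and>
            real CARD('n) + 1 - Min (range H) = real CARD('n) - 1 + Max (range s))"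
proof -
  define h where "h = Min (range H)"
  have "h \<in> range H" unfolding h_def by (rule Min_in) auto
  then obtain i0 where i0: "H i0 = h" by auto
  have Hge: "\<And>i. h \<le> H i" unfolding h_def by (rule Min_le) auto
  have hpos: "0 < h" "h \<le> 1" using H[of i0] i0 by auto
  define N where "N = (\<lambda>\<delta>. card (gset \<delta> (cbox a b) f))"
  have gr: "(\<lambda>\<delta>. grid_count \<delta> (graphn (cbox a b) f)) = N" unfolding N_def grid_graphn ..
  have UB: "\<exists>K>0. \<exists>\<delta>1>0. \<forall>\<delta>. 0 < \<delta> \<and> \<delta> < \<delta>1 \<longrightarrow> 1 \<le> N \<delta> \<and>
      real (N \<delta>) \<le> K * \<delta> powr (- (real CARD('n) + 1 - h))" if hyp: "osc_hyp a b f H"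
    unfolding N_def by (rule upper_n[OF ab cont hpos Hge hyp])
  have LB: "\<exists>k>0. \<exists>\<delta>1>0. \<forall>\<delta>. 0 < \<delta> \<and> \<delta> < \<delta>1 \<longrightarrow>
      k * \<delta> powr (- (real CARD('n) + 1 - h)) \<le> real (N \<delta>)" if hyp: "var_hyp a b f H"
    using lower_n[OF ab cont hyp, of i0] unfolding N_def i0 .
  have P1: "upper_box_dim (graphn (cbox a b) f) \<le> ereal (real CARD('n) + 1 - h)" if hyp: "osc_hyp a b f H"
  proof -
    obtain K \<delta>1 where K: "K > 0" "\<delta>1 > 0" and B: "\<forall>\<delta>. 0 < \<delta> \<and> \<delta> < \<delta>1 \<longrightarrow> 1 \<le> N \<delta> \<and>
      real (N \<delta>) \<le> K * \<delta> powr (- (real CARD('n) + 1 - h))" using UB[OF hyp] by blast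
    have "Limsup (at_right 0) (\<lambda>\<delta>. ereal (ln (real (N \<delta>)) / ln (1/\<delta>))) \<le> ereal (real CARD('n) + 1 - h)"
      by (rule dim_upper(1)[of K \<delta>1 N]) (use K B in auto)
    then show ?thesis unfolding upper_box_dim_def grid_graphn N_def .
  qed
  have P2: "ereal (real CARD('n) + 1 - h) \<le> lower_box_dim (graphn (cbox a b) f)" if hyp: "var_hyp a b f H"
  proof -
    obtain k \<delta>1 where k: "k > 0" "\<delta>1 > 0" and B: "\<forall>\<delta>. 0 < \<delta> \<and> \<delta> < \<delta>1 \<longrightarrow>
      k * \<delta> powr (- (real CARD('n) + 1 - h)) \<le> real (N \<delta>)" using LB[OF hyp] by blast
    have "ereal (real CARD('n) + 1 - h) \<le> Liminf (at_right 0) (\<lambda>\<delta>. ereal (ln (real (N \<delta>)) / ln (1/\<delta>)))"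
      by (rule dim_lower[of k \<delta>1 _ N]) (use k B in auto)
    then show ?thesis unfolding lower_box_dim_def grid_graphn N_def .
  qed
  have P3a: "has_box_dim (graphn (cbox a b) f) (real CARD('n) + 1 - h)"
    if hyp1: "osc_hyp a b f H" and hyp2: "var_hyp a b f H"
  proof -
    obtain K \<delta>1 where K: "K > 0" "\<delta>1 > 0" and B: "\<forall>\<delta>. 0 < \<delta> \<and> \<delta> < \<delta>1 \<longrightarrow> 1 \<le> N \<delta> \<and>
      real (N \<delta>) \<le> K * \<delta> powr (- (real CARD('n) + 1 - h))" using UB[OF hyp1] by blast
    obtain k \<delta>2 where k: "k > 0" "\<delta>2 > 0" and B2: "\<forall>\<delta>. 0 < \<delta> \<and> \<delta> < \<delta>2 \<longrightarrow>
      k * \<delta> powr (- (real CARD('n) + 1 - h)) \<le> real (N \<delta>)" using LB[OF hyp2] by blast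
    have "((\<lambda>\<delta>. ln (real (N \<delta>)) / ln (1/\<delta>)) \<longlongrightarrow> real CARD('n) + 1 - h) (at_right 0)"
      by (rule dim_both[OF K(1,2) _ k(1) k(2)]) (use B B2 in auto)
    then show ?thesis unfolding has_box_dim_def gr[symmetric] .
  qed
  have sval: "s i = 2 - H i" if hyp1: "osc_hyp a b f H" and hyp2: "var_hyp a b f H" for i
  proof -
    obtain c where c: "\<And>i. c i > 0" and ex: "\<exists>\<delta>0>0. \<forall>\<delta>. 0 < \<delta> \<and> \<delta> < \<delta>0 \<longrightarrow>
        (\<forall>i. \<forall>x\<in>cbox a b. \<forall>t\<in>{a$i..b$i}. osc (a$i) (b$i) \<delta> t (fsec f x i) \<le> c i * \<delta> powr H i)"
      using hyp1 unfolding osc_hyp_def by blast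
    obtain \<delta>0 where d0: "\<delta>0 > 0" and O': "\<forall>\<delta>. 0 < \<delta> \<and> \<delta> < \<delta>0 \<longrightarrow>
        (\<forall>i. \<forall>x\<in>cbox a b. \<forall>t\<in>{a$i..b$i}. osc (a$i) (b$i) \<delta> t (fsec f x i) \<le> c i * \<delta> powr H i)"
      using ex by blast
    have O: "osc (a$i) (b$i) \<delta> t (fsec f x i) \<le> c i * \<delta> powr H i"
      if "0 < \<delta>" "\<delta> < \<delta>0" "x \<in> cbox a b" "t \<in> {a$i..b$i}" for \<delta> x t
      using O' that by blast
    obtain A cv where hA: "\<forall>i. cv i > 0 \<and>
        A i \<subseteq> {x \<in> cbox a b. x$i = a$i} \<and> {x \<in> cbox a b. x$i = a$i} \<subseteq> closure (A i) \<and>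
        (\<exists>\<delta>0>0. \<forall>\<delta>. 0 < \<delta> \<and> \<delta> < \<delta>0 \<longrightarrow>
           (\<forall>x\<in>A i. Var (a$i) (b$i) \<delta> (fsec f x i) \<ge> cv i * \<delta> powr H i))"
      using hyp2 unfolding var_hyp_def by (elim exE) (rule that)
    have hA0: "cv i > 0" "A i \<subseteq> {x \<in> cbox a b. x$i = a$i}" "{x \<in> cbox a b. x$i = a$i} \<subseteq> closure (A i)"
      "\<exists>\<delta>0>0. \<forall>\<delta>. 0 < \<delta> \<and> \<delta> < \<delta>0 \<longrightarrow>
           (\<forall>x\<in>A i. Var (a$i) (b$i) \<delta> (fsec f x i) \<ge> cv i * \<delta> powr H i)"
      using spec[OF hA, of i] by auto
    obtain \<delta>0' where d0': "\<delta>0' > 0" and V: "\<forall>\<delta>. 0 < \<delta> \<and> \<delta> < \<delta>0' \<longrightarrow>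
           (\<forall>x\<in>A i. Var (a$i) (b$i) \<delta> (fsec f x i) \<ge> cv i * \<delta> powr H i)"
      using hA0(4) by (elim exE conjE) (rule that)
    have gcont: "continuous_on {a$i..b$i} (fsec f x i)" if "x \<in> cbox a b" for x
      using sec_cont[OF cont axis_Basis that, of i] unfolding fsec_sec inner_axis1 .
    have Hi: "0 < H i" "H i \<le> 1" using H[of i] by auto
    define S where "S = {d. \<exists>x\<in>cbox a b. has_box_dim (graph1 (a$i) (b$i) (fsec f x i)) d}"
    have up: "\<exists>K>0. \<exists>\<delta>1>0. \<forall>\<delta>. 0 < \<delta> \<and> \<delta> < \<delta>1 \<longrightarrow> 1 \<le> card (gset \<delta> (cbox (a$i) (b$i)) (fsec f x i)) \<and>
      real (card (gset \<delta> (cbox (a$i) (b$i)) (fsec f x i))) \<le> K * \<delta> powr (- (2 - H i))" if x: "x \<in> cbox a b" for x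
      by (rule one_dim_upper[OF ab gcont[OF x] Hi d0 less_imp_le[OF c]]) (use O x in auto)
    have grr: "(\<lambda>\<delta>. grid_count \<delta> (graph1 (a$i) (b$i) g)) = (\<lambda>\<delta>. card (gset \<delta> (cbox (a$i) (b$i)) g))" for g
      unfolding grid_graph1 ..
    have ub: "d \<le> 2 - H i" if dS: "d \<in> S" for d
    proof -
      obtain x where x: "x \<in> cbox a b" and hb: "has_box_dim (graph1 (a$i) (b$i) (fsec f x i)) d"
        using dS unfolding S_def by blast
      obtain K \<delta>1 where K: "K > 0" "\<delta>1 > 0" and B: "\<forall>\<delta>. 0 < \<delta> \<and> \<delta> < \<delta>1 \<longrightarrow> 1 \<le> card (gset \<delta> (cbox (a$i) (b$i)) (fsec f x i)) \<and>
        real (card (gset \<delta> (cbox (a$i) (b$i)) (fsec f x i))) \<le> K * \<delta> powr (- (2 - H i))"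
        using up[OF x] by blast
      have lim: "((\<lambda>\<delta>. ln (real (card (gset \<delta> (cbox (a$i) (b$i)) (fsec f x i)))) / ln (1/\<delta>)) \<longlongrightarrow> d) (at_right 0)"
        using hb unfolding has_box_dim_def grid_graph1 .
      show ?thesis
        by (rule dim_upper(2)[of K \<delta>1 "\<lambda>\<delta>. card (gset \<delta> (cbox (a$i) (b$i)) (fsec f x i))" "2 - H i" d])
          (use K B lim in auto)
    qed
    have mem: "2 - H i \<in> S"
    proof -
      have abox: "a \<in> cbox a b" unfolding mem_box using ab_Basis[OF ab] by (auto simp: less_imp_le)
      then have "a \<in> closure (A i)" using hA0(3) by blast
      then have "A i \<noteq> {}" by auto
      then obtain x where xA: "x \<in> A i" by blast
      then have x: "x \<in> cbox a b" using hA0(2) by blast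
      obtain K \<delta>1 where K: "K > 0" "\<delta>1 > 0" and B: "\<forall>\<delta>. 0 < \<delta> \<and> \<delta> < \<delta>1 \<longrightarrow> 1 \<le> card (gset \<delta> (cbox (a$i) (b$i)) (fsec f x i)) \<and>
        real (card (gset \<delta> (cbox (a$i) (b$i)) (fsec f x i))) \<le> K * \<delta> powr (- (2 - H i))"
        using up[OF x] by blast
      have "\<exists>k>0. \<exists>\<delta>1>0. \<forall>\<delta>. 0 < \<delta> \<and> \<delta> < \<delta>1 \<longrightarrow>
          k * \<delta> powr (- (2 - H i)) \<le> real (card (gset \<delta> (cbox (a$i) (b$i)) (fsec f x i)))"
        by (rule one_dim_lower[OF ab gcont[OF x] d0' hA0(1)]) (use V xA in auto)
      then obtain k \<delta>2 where k: "k > 0" "\<delta>2 > 0" and B2: "\<forall>\<delta>. 0 < \<delta> \<and> \<delta> < \<delta>2 \<longrightarrow>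
          k * \<delta> powr (- (2 - H i)) \<le> real (card (gset \<delta> (cbox (a$i) (b$i)) (fsec f x i)))" by blast
      have "((\<lambda>\<delta>. ln (real (card (gset \<delta> (cbox (a$i) (b$i)) (fsec f x i)))) / ln (1/\<delta>)) \<longlongrightarrow> 2 - H i) (at_right 0)"
        by (rule dim_both[OF K(1,2) _ k(1) k(2)]) (use B B2 in auto)
      then have "has_box_dim (graph1 (a$i) (b$i) (fsec f x i)) (2 - H i)"
        unfolding has_box_dim_def grid_graph1 .
      then show ?thesis unfolding S_def using x by blast
    qed
    show ?thesis unfolding s_def S_def[symmetric] by (rule cSup_eq_maximum[OF mem ub])
  qed
  have P3b: "real CARD('n) + 1 - h = real CARD('n) - 1 + Max (range s)"
    if hyp1: "osc_hyp a b f H" and hyp2: "var_hyp a b f H"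
  proof -
    have "Max (range s) = 2 - h"
    proof (rule Max_eqI)
      show "finite (range s)" by simp
      show "y \<le> 2 - h" if "y \<in> range s" for y
        using that sval[OF hyp1 hyp2] Hge by auto
      show "2 - h \<in> range s" using sval[OF hyp1 hyp2, of i0] i0 by (metis rangeI)
    qed
    then show ?thesis by simp
  qed
  show ?thesis unfolding h_def[symmetric] using P1 P2 P3a P3b by blast
qed

end
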